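(* Let $w:\mathbb{Z}\to\mathbb{R}$ be a weight with $w(n)\geq 1$ for all $n$ and $\sup_{n\in\mathbb{Z}}\big(|\tfrac{w(n+1)}{w(n)}|+|\tfrac{w(n)}{w(n+1)}|\big)<\infty$, and fix $1\leq p\leq\infty$. Fix $\underline r=(r_-,r_+)\in\mathbb{N}_0^2$ and summation constants $c_{j,\pm}\in\mathbb{C}$. Suppose $(\alpha(t),\beta(t))$, $(\alpha_\ell(t),\beta_\ell(t))$ and $(\alpha_r(t),\beta_r(t))$ are arbitrary bounded solutions of the equation $\mathrm{AL}_{\underline r}(\alpha,\beta)=0$ of the Ablowitz--Ladik hierarchy, defined for $t\in(t_0-T,t_0+T)$, and set \[ \tilde\alpha(n,t)=\begin{cases}\alpha_r(n,t),& n\geq0,\\ \alpha_\ell(n,t),& n<0,\end{cases}\qquad \tilde\beta(n,t)=\begin{cases}\beta_r(n,t),& n\geq0,\\ \beta_\ell(n,t),& n<0.\end{cases} \] If $\|(\alpha(t)-\tilde\alpha(t),\beta(t)-\tilde\beta(t))\|_{w,p}<\infty$ holds for $t=t_0$, then it holds for all $t\in(t_0-T,t_0+T)$.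
   Context: Sequences are complex valued on $\mathbb{Z}$, $f^\pm(n)=f(n\pm1)$. Solutions are bounded on $\mathbb{Z}\times(t_0-T,t_0+T)$ and $C^1$ in $t$; $T>0$ is the length of the local existence interval. Ablowitz--Ladik hierarchy: define homogeneous coefficients recursively by $\hat f_{0,+}=-\alpha^+$, $\hat g_{0,+}=\tfrac12$, $\hat h_{0,+}=\beta$, $\hat f_{0,-}=\alpha$, $\hat g_{0,-}=\tfrac12$, $\hat h_{0,-}=-\beta^+$, and for $\ell\geq0$ \[ \hat g_{\ell+1,\pm}=\sum_{k=0}^{\ell}\hat f_{\ell-k,\pm}\hat h_{k,\pm}-\sum_{k=1}^{\ell}\hat g_{\ell+1-k,\pm}\hat g_{k,\pm}, \] \[ \hat f_{\ell+1,+}^-=\hat f_{\ell,+}-\alpha(\hat g_{\ell+1,+}+\hat g_{\ell+1,+}^-),\quad \hat h_{\ell+1,+}=\hat h_{\ell,+}^-+\beta(\hat g_{\ell+1,+}+\hat g_{\ell+1,+}^-), \] \[ \hat f_{\ell+1,-}=\hat f_{\ell,-}^-+\alpha(\hat g_{\ell+1,-}+\hat g_{\ell+1,-}^-),\quad \hat h_{\ell+1,-}^-=\hat h_{\ell,-}-\beta(\hat g_{\ell+1,-}+\hat g_{\ell+1,-}^-). \] Given constants $c_{j,\pm}\in\mathbb{C}$, set $f_{\ell,\pm}=\sum_{k=0}^{\ell}c_{\ell-k,\pm}\hat f_{k,\pm}$, and similarly $g_{\ell,\pm}$, $h_{\ell,\pm}$. (These satisfy $g_{0,+}=\tfrac12c_{0,+}$,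 $f_{0,+}=-c_{0,+}\alpha^+$, $h_{0,+}=c_{0,+}\beta$, $g_{\ell+1,+}-g_{\ell+1,+}^-=\alpha h_{\ell,+}^-+\beta f_{\ell,+}$, etc.) The equation $\mathrm{AL}_{\underline r}(\alpha,\beta)=0$ is \[ -i\alpha_t-\alpha(g_{r_+,+}+g_{r_-,-}^-)+f_{r_+-1,+}-f_{r_--1,-}^-=0,\qquad -i\beta_t+\beta(g_{r_+,+}^-+g_{r_-,-})-h_{r_--1,-}+h_{r_+-1,+}^-=0, \] where $f_{-1,\pm}=h_{-1,\pm}=0$. For example $\underline r=(1,1)$, $c_{0,\pm}=1$, $c_{1,\pm}=-2$ gives $-i\alpha_t-(1-\alpha\beta)(\alpha^-+\alpha^+)+2\alpha=0$, $-i\beta_t+(1-\alpha\beta)(\beta^-+\beta^+)-2\beta=0$. Norm: $\|(\alpha,\beta)\|_{w,p}=\big(\sum_n w(n)(|\alpha(n)|^p+|\beta(n)|^p)\big)^{1/p}$ for $1\leq p<\infty$, and $\|(\alpha,\beta)\|_{w,\infty}=\sup_n w(n)(|\alpha(n)|+|\beta(n)|)$. *)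

theory Defs
  imports "HOL-Analysis.Analysis"
begin

type_synonym seq = "int \<Rightarrow> complex"

text \<open>For a sign (True = +, False = -)
  and sequences a (alpha) and b (beta) at a fixed time, AL_hat_list s a b l is the
  list [(f_0,g_0,h_0), ..., (f_l,g_l,h_l)] of the homogeneous coefficients
  (hat f_{k,s}, hat g_{k,s}, hat h_{k,s}).  The recursion relations with shifts
  f^-(n) = f(n-1) are solved for the unshifted unknown.\<close>

primrec AL_hat_list :: "bool \<Rightarrow> seq \<Rightarrow> seq \<Rightarrow> nat \<Rightarrow> (seq \<times> seq \<times> seq) list" where
  "AL_hat_list s a b 0 =
     (if s then [(\<lambda>n. - a (n + 1), \<lambda>n. 1/2, \<lambda>n. b n)]
      else [(\<lambda>n. a n, \<lambda>n. 1/2, \<lambda>n. - b (n + 1))])"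
| "AL_hat_list s a b (Suc l) =
     (let L = AL_hat_list s a b l;
          F = (\<lambda>k. fst (L ! k));
          G = (\<lambda>k. fst (snd (L ! k)));
          H = (\<lambda>k. snd (snd (L ! k)));
          gn = (\<lambda>n. (\<Sum>k\<le>l. F (l - k) n * H k n) - (\<Sum>k\<in>{1..l}. G (l + 1 - k) n * G k n));
          fn = (if s then (\<lambda>n. F l (n + 1) - a (n + 1) * (gn (n + 1) + gn n))
                else (\<lambda>n. F l (n - 1) + a n * (gn n + gn (n - 1))));
          hn = (if s then (\<lambda>n. H l (n - 1) + b n * (gn n + gn (n - 1)))
                else (\<lambda>n. H l (n + 1) - b (n + 1) * (gn (n + 1) + gn n)))
      in L @ [(fn, gn, hn)])"

definition AL_hat_f :: "bool \<Rightarrow> seq \<Rightarrow> seq \<Rightarrow> nat \<Rightarrow> seq" where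
  "AL_hat_f s a b l = fst (AL_hat_list s a b l ! l)"
definition AL_hat_g :: "bool \<Rightarrow> seq \<Rightarrow> seq \<Rightarrow> nat \<Rightarrow> seq" where
  "AL_hat_g s a b l = fst (snd (AL_hat_list s a b l ! l))"
definition AL_hat_h :: "bool \<Rightarrow> seq \<Rightarrow> seq \<Rightarrow> nat \<Rightarrow> seq" where
  "AL_hat_h s a b l = snd (snd (AL_hat_list s a b l ! l))"

definition AL_f :: "bool \<Rightarrow> (nat \<Rightarrow> complex) \<Rightarrow> seq \<Rightarrow> seq \<Rightarrow> nat \<Rightarrow> seq" where
  "AL_f s c a b l = (\<lambda>n. \<Sum>k\<le>l. c (l - k) * AL_hat_f s a b k n)"
definition AL_g :: "bool \<Rightarrow> (nat \<Rightarrow> complex) \<Rightarrow> seq \<Rightarrow> seq \<Rightarrow> nat \<Rightarrow> seq" where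
  "AL_g s c a b l = (\<lambda>n. \<Sum>k\<le>l. c (l - k) * AL_hat_g s a b k n)"
definition AL_h :: "bool \<Rightarrow> (nat \<Rightarrow> complex) \<Rightarrow> seq \<Rightarrow> seq \<Rightarrow> nat \<Rightarrow> seq" where
  "AL_h s c a b l = (\<lambda>n. \<Sum>k\<le>l. c (l - k) * AL_hat_h s a b k n)"

text \<open>f_{r-1} and h_{r-1} with the convention f_{-1} = h_{-1} = 0.\<close>
definition AL_fm1 :: "bool \<Rightarrow> (nat \<Rightarrow> complex) \<Rightarrow> seq \<Rightarrow> seq \<Rightarrow> nat \<Rightarrow> seq" where
  "AL_fm1 s c a b r = (if r = 0 then (\<lambda>n. 0) else AL_f s c a b (r - 1))"
definition AL_hm1 :: "bool \<Rightarrow> (nat \<Rightarrow> complex) \<Rightarrow> seq \<Rightarrow> seq \<Rightarrow> nat \<Rightarrow> seq" where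
  "AL_hm1 s c a b r = (if r = 0 then (\<lambda>n. 0) else AL_h s c a b (r - 1))"

definition AL_solution ::
  "nat \<Rightarrow> nat \<Rightarrow> (nat \<Rightarrow> complex) \<Rightarrow> (nat \<Rightarrow> complex) \<Rightarrow> real set
     \<Rightarrow> (real \<Rightarrow> seq) \<Rightarrow> (real \<Rightarrow> seq) \<Rightarrow> bool" where
  "AL_solution rm rp cm cp I \<alpha> \<beta> \<longleftrightarrow>
     (\<exists>M. \<forall>t\<in>I. \<forall>n. norm (\<alpha> t n) \<le> M \<and> norm (\<beta> t n) \<le> M) \<and>
     (\<exists>\<alpha>' \<beta>'. \<forall>n.
        continuous_on I (\<lambda>t. \<alpha>' t n) \<and> continuous_on I (\<lambda>t. \<beta>' t n) \<and>
        (\<forall>t\<in>I.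
           ((\<lambda>s. \<alpha> s n) has_vector_derivative \<alpha>' t n) (at t) \<and>
           ((\<lambda>s. \<beta> s n) has_vector_derivative \<beta>' t n) (at t) \<and>
           - \<i> * \<alpha>' t n
             - \<alpha> t n * (AL_g True cp (\<alpha> t) (\<beta> t) rp n + AL_g False cm (\<alpha> t) (\<beta> t) rm (n - 1))
             + AL_fm1 True cp (\<alpha> t) (\<beta> t) rp n - AL_fm1 False cm (\<alpha> t) (\<beta> t) rm (n - 1) = 0 \<and>
           - \<i> * \<beta>' t n
             + \<beta> t n * (AL_g True cp (\<alpha> t) (\<beta> t) rp (n - 1) + AL_g False cm (\<alpha> t) (\<beta> t) rm n)
             - AL_hm1 False cm (\<alpha> t) (\<beta> t) rm n + AL_hm1 True cp (\<alpha> t) (\<beta> t) rp (n - 1) = 0))"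

definition wnorm_finite :: "(int \<Rightarrow> real) \<Rightarrow> ereal \<Rightarrow> seq \<Rightarrow> seq \<Rightarrow> bool" where
  "wnorm_finite w p a b =
     (if p = \<infinity> then bdd_above (range (\<lambda>n. w n * (norm (a n) + norm (b n))))
      else (\<lambda>n. w n * (norm (a n) powr real_of_ereal p + norm (b n) powr real_of_ereal p))
              summable_on UNIV)"

end

theory Submission
  imports Defs
begin

definition dsum :: "nat \<Rightarrow> seq \<Rightarrow> seq \<Rightarrow> seq \<Rightarrow> seq \<Rightarrow> int \<Rightarrow> real" where
  "dsum R a b a' b' n = (\<Sum>j\<in>{- int R..int R}. norm (a (n+j) - a' (n+j)) + norm (b (n+j) - b' (n+j)))"

definition bnd :: "real \<Rightarrow> seq \<Rightarrow> seq \<Rightarrow> seq \<Rightarrow> seq \<Rightarrow> bool" where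
  "bnd M a b a' b' \<longleftrightarrow> (\<forall>n. norm (a n) \<le> M \<and> norm (b n) \<le> M \<and> norm (a' n) \<le> M \<and> norm (b' n) \<le> M)"

definition locR :: "nat \<Rightarrow> (seq \<Rightarrow> seq \<Rightarrow> seq) \<Rightarrow> bool" where
  "locR R F \<longleftrightarrow> (\<forall>M. \<exists>C B. \<forall>a b a' b' n. bnd M a b a' b' \<longrightarrow>
      norm (F a b n) \<le> B \<and> norm (F a b n - F a' b' n) \<le> C * dsum R a b a' b' n)"

definition loc :: "(seq \<Rightarrow> seq \<Rightarrow> seq) \<Rightarrow> bool" where
  "loc F \<longleftrightarrow> (\<exists>R. locR R F)"

lemma bnd_swap: "bnd M a b a' b' \<Longrightarrow> bnd M a' b' a b"
  unfolding bnd_def by blast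

lemma locRD: "locR R F \<Longrightarrow> \<exists>C B. \<forall>a b a' b' n. bnd M a b a' b' \<longrightarrow>
      norm (F a b n) \<le> B \<and> norm (F a b n - F a' b' n) \<le> C * dsum R a b a' b' n"
  unfolding locR_def by blast

lemma locRI: "(\<And>M. \<exists>C B. \<forall>a b a' b' n. bnd M a b a' b' \<longrightarrow>
      norm (F a b n) \<le> B \<and> norm (F a b n - F a' b' n) \<le> C * dsum R a b a' b' n) \<Longrightarrow> locR R F"
  unfolding locR_def by blast

lemma dsum_nonneg: "0 \<le> dsum R a b a' b' n"
  unfolding dsum_def by (intro sum_nonneg) auto

lemma dsum_mono: "R \<le> R' \<Longrightarrow> dsum R a b a' b' n \<le> dsum R' a b a' b' n"
  unfolding dsum_def by (intro sum_mono2) auto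

lemma dsum_shift: "dsum R a b a' b' (n + k) \<le> dsum (R + nat \<bar>k\<bar>) a b a' b' n"
proof -
  have "dsum R a b a' b' (n + k) = (\<Sum>j\<in>{- int R..int R}. (\<lambda>i. norm (a (n+i) - a' (n+i)) + norm (b (n+i) - b' (n+i))) (j + k))"
    unfolding dsum_def by (simp add: ac_simps)
  also have "\<dots> = (\<Sum>i\<in>(\<lambda>j. j + k) ` {- int R..int R}. norm (a (n+i) - a' (n+i)) + norm (b (n+i) - b' (n+i)))"
    by (subst sum.reindex) (auto simp: inj_on_def)
  also have "\<dots> \<le> dsum (R + nat \<bar>k\<bar>) a b a' b' n"
    unfolding dsum_def by (intro sum_mono2) auto
  finally show ?thesis .
qed

lemma dsum_ge: "norm (a n - a' n) + norm (b n - b' n) \<le> dsum R a b a' b' n"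
proof -
  have "norm (a n - a' n) + norm (b n - b' n) = norm (a (n+0) - a' (n+0)) + norm (b (n+0) - b' (n+0))" by simp
  also have "\<dots> \<le> dsum R a b a' b' n" unfolding dsum_def
    by (rule member_le_sum[where f="\<lambda>j. norm (a (n+j) - a' (n+j)) + norm (b (n+j) - b' (n+j))"]) auto
  finally show ?thesis .
qed

lemma locR_mono:
  assumes F: "locR R F" and RR: "R \<le> R'" shows "locR R' F"
proof (rule locRI)
  fix M
  obtain C B where CB: "\<forall>a b a' b' n. bnd M a b a' b' \<longrightarrow>
      norm (F a b n) \<le> B \<and> norm (F a b n - F a' b' n) \<le> C * dsum R a b a' b' n"
    using locRD[OF F, of M] by blast
  show "\<exists>C B. \<forall>a b a' b' n. bnd M a b a' b' \<longrightarrow>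
      norm (F a b n) \<le> B \<and> norm (F a b n - F a' b' n) \<le> C * dsum R' a b a' b' n"
  proof (rule exI[of _ "max C 0"], rule exI[of _ B], intro allI impI)
    fix a b a' b' n assume A: "bnd M a b a' b'"
    have c: "norm (F a b n) \<le> B \<and> norm (F a b n - F a' b' n) \<le> C * dsum R a b a' b' n" using CB A by simp
    have "norm (F a b n - F a' b' n) \<le> C * dsum R a b a' b' n" using c by (rule conjunct2)
    also have "\<dots> \<le> max C 0 * dsum R a b a' b' n" by (intro mult_right_mono) (auto simp: dsum_nonneg)
    also have "\<dots> \<le> max C 0 * dsum R' a b a' b' n" by (intro mult_left_mono dsum_mono RR) auto
    finally show "norm (F a b n) \<le> B \<and> norm (F a b n - F a' b' n) \<le> max C 0 * dsum R' a b a' b' n"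
      using c by (intro conjI) auto
  qed
qed

lemma locR_const: "locR R (\<lambda>a b n. c)"
  by (rule locRI, rule exI[of _ 0], rule exI[of _ "norm c"]) (auto simp: dsum_nonneg)

lemma locR_a: "locR R (\<lambda>a b. a)"
proof (rule locRI)
  fix M show "\<exists>C B. \<forall>a b a' b' n. bnd M a b a' b' \<longrightarrow>
      norm (a n) \<le> B \<and> norm (a n - a' n) \<le> C * dsum R a b a' b' n"
    apply (rule exI[where x=1], rule exI[where x=M], intro allI impI conjI)
     apply (simp add: bnd_def)
    subgoal for a b a' b' n using dsum_ge[of a n a' b b' R] norm_ge_zero[of "b n - b' n"] by linarith
    done
qed

lemma locR_b: "locR R (\<lambda>a b. b)"
proof (rule locRI)
  fix M show "\<exists>C B. \<forall>a b a' b' n. bnd M a b a' b' \<longrightarrow>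
      norm (b n) \<le> B \<and> norm (b n - b' n) \<le> C * dsum R a b a' b' n"
    apply (rule exI[where x=1], rule exI[where x=M], intro allI impI conjI)
     apply (simp add: bnd_def)
    subgoal for a b a' b' n using dsum_ge[of a n a' b b' R] norm_ge_zero[of "a n - a' n"] by linarith
    done
qed

lemma locR_add:
  assumes F: "locR R F" and G: "locR R G"
  shows "locR R (\<lambda>a b n. F a b n + G a b n)"
proof (rule locRI)
  fix M
  obtain C1 B1 where 1: "\<forall>a b a' b' n. bnd M a b a' b' \<longrightarrow>
      norm (F a b n) \<le> B1 \<and> norm (F a b n - F a' b' n) \<le> C1 * dsum R a b a' b' n"
    using locRD[OF F, of M] by blast
  obtain C2 B2 where 2: "\<forall>a b a' b' n. bnd M a b a' b' \<longrightarrow>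
      norm (G a b n) \<le> B2 \<and> norm (G a b n - G a' b' n) \<le> C2 * dsum R a b a' b' n"
    using locRD[OF G, of M] by blast
  show "\<exists>C B. \<forall>a b a' b' n. bnd M a b a' b' \<longrightarrow>
      norm (F a b n + G a b n) \<le> B \<and> norm (F a b n + G a b n - (F a' b' n + G a' b' n)) \<le> C * dsum R a b a' b' n"
  proof (rule exI[of _ "C1 + C2"], rule exI[of _ "B1 + B2"], intro allI impI conjI)
    fix a b a' b' n assume A: "bnd M a b a' b'"
    have f: "norm (F a b n) \<le> B1 \<and> norm (F a b n - F a' b' n) \<le> C1 * dsum R a b a' b' n" using 1 A by simp
    have g: "norm (G a b n) \<le> B2 \<and> norm (G a b n - G a' b' n) \<le> C2 * dsum R a b a' b' n" using 2 A by simp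
    show "norm (F a b n + G a b n) \<le> B1 + B2" using f g norm_triangle_ineq[of "F a b n" "G a b n"] by linarith
    have "norm (F a b n + G a b n - (F a' b' n + G a' b' n)) \<le> norm (F a b n - F a' b' n) + norm (G a b n - G a' b' n)"
      by (metis add_diff_add norm_triangle_ineq)
    then show "norm (F a b n + G a b n - (F a' b' n + G a' b' n)) \<le> (C1 + C2) * dsum R a b a' b' n"
      using f g by (simp add: distrib_right)
  qed
qed

lemma locR_mult:
  assumes F: "locR R F" and G: "locR R G"
  shows "locR R (\<lambda>a b n. F a b n * G a b n)"
proof (rule locRI)
  fix M
  obtain C1 B1 where 1: "\<forall>a b a' b' n. bnd M a b a' b' \<longrightarrow>
      norm (F a b n) \<le> B1 \<and> norm (F a b n - F a' b' n) \<le> C1 * dsum R a b a' b' n"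
    using locRD[OF F, of M] by blast
  obtain C2 B2 where 2: "\<forall>a b a' b' n. bnd M a b a' b' \<longrightarrow>
      norm (G a b n) \<le> B2 \<and> norm (G a b n - G a' b' n) \<le> C2 * dsum R a b a' b' n"
    using locRD[OF G, of M] by blast
  show "\<exists>C B. \<forall>a b a' b' n. bnd M a b a' b' \<longrightarrow>
      norm (F a b n * G a b n) \<le> B \<and> norm (F a b n * G a b n - (F a' b' n * G a' b' n)) \<le> C * dsum R a b a' b' n"
  proof (rule exI[of _ "B1 * C2 + B2 * C1"], rule exI[of _ "B1 * B2"], intro allI impI conjI)
    fix a b a' b' n assume A: "bnd M a b a' b'"
    have A': "bnd M a' b' a b" using A by (rule bnd_swap)
    have f: "norm (F a b n) \<le> B1 \<and> norm (F a b n - F a' b' n) \<le> C1 * dsum R a b a' b' n" using 1 A by simp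
    have g: "norm (G a b n) \<le> B2 \<and> norm (G a b n - G a' b' n) \<le> C2 * dsum R a b a' b' n" using 2 A by simp
    have g2: "norm (G a' b' n) \<le> B2" using 2 A' by simp
    have B1: "0 \<le> B1" using f norm_ge_zero[of "F a b n"] by linarith
    have B2: "0 \<le> B2" using g norm_ge_zero[of "G a b n"] by linarith
    show "norm (F a b n * G a b n) \<le> B1 * B2" unfolding norm_mult using f g B1 by (intro mult_mono) auto
    have "F a b n * G a b n - F a' b' n * G a' b' n = F a b n * (G a b n - G a' b' n) + G a' b' n * (F a b n - F a' b' n)"
      by (simp add: algebra_simps)
    hence "norm (F a b n * G a b n - F a' b' n * G a' b' n) = norm (F a b n * (G a b n - G a' b' n) + G a' b' n * (F a b n - F a' b' n))"
      by simp
    also have "\<dots> \<le> norm (F a b n * (G a b n - G a' b' n)) + norm (G a' b' n * (F a b n - F a' b' n))"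
      by (rule norm_triangle_ineq)
    also have "\<dots> = norm (F a b n) * norm (G a b n - G a' b' n) + norm (G a' b' n) * norm (F a b n - F a' b' n)"
      by (simp add: norm_mult)
    also have "\<dots> \<le> B1 * (C2 * dsum R a b a' b' n) + B2 * (C1 * dsum R a b a' b' n)"
    proof (rule add_mono)
      show "norm (F a b n) * norm (G a b n - G a' b' n) \<le> B1 * (C2 * dsum R a b a' b' n)"
        using f g B1 by (intro mult_mono) auto
      show "norm (G a' b' n) * norm (F a b n - F a' b' n) \<le> B2 * (C1 * dsum R a b a' b' n)"
        using f g2 B2 by (intro mult_mono) auto
    qed
    also have "\<dots> = (B1 * C2 + B2 * C1) * dsum R a b a' b' n"
      by (simp add: distrib_right mult.assoc)
    finally show "norm (F a b n * G a b n - (F a' b' n * G a' b' n)) \<le> (B1 * C2 + B2 * C1) * dsum R a b a' b' n"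
      by simp
  qed
qed

lemma locR_shift:
  assumes F: "locR R F"
  shows "locR (R + nat \<bar>k\<bar>) (\<lambda>a b n. F a b (n + k))"
proof (rule locRI)
  fix M
  obtain C B where 1: "\<forall>a b a' b' n. bnd M a b a' b' \<longrightarrow>
      norm (F a b n) \<le> B \<and> norm (F a b n - F a' b' n) \<le> C * dsum R a b a' b' n"
    using locRD[OF F, of M] by blast
  show "\<exists>C B. \<forall>a b a' b' n. bnd M a b a' b' \<longrightarrow>
      norm (F a b (n + k)) \<le> B \<and> norm (F a b (n + k) - F a' b' (n + k)) \<le> C * dsum (R + nat \<bar>k\<bar>) a b a' b' n"
  proof (rule exI[of _ "max C 0"], rule exI[of _ B], intro allI impI conjI)
    fix a b a' b' n assume A: "bnd M a b a' b'"
    have f: "norm (F a b (n+k)) \<le> B \<and> norm (F a b (n+k) - F a' b' (n+k)) \<le> C * dsum R a b a' b' (n+k)" using 1 A by simp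
    show "norm (F a b (n + k)) \<le> B" using f by simp
    have "norm (F a b (n + k) - F a' b' (n + k)) \<le> C * dsum R a b a' b' (n + k)" using f by simp
    also have "\<dots> \<le> max C 0 * dsum R a b a' b' (n + k)" by (intro mult_right_mono) (auto simp: dsum_nonneg)
    also have "\<dots> \<le> max C 0 * dsum (R + nat \<bar>k\<bar>) a b a' b' n" by (intro mult_left_mono dsum_shift) auto
    finally show "norm (F a b (n + k) - F a' b' (n + k)) \<le> max C 0 * dsum (R + nat \<bar>k\<bar>) a b a' b' n" .
  qed
qed

lemma locR_sum:
  assumes "finite I" "\<And>i. i \<in> I \<Longrightarrow> locR R (F i)"
  shows "locR R (\<lambda>a b n. \<Sum>i\<in>I. F i a b n)"
  using assms
proof (induction I rule: finite_induct)
  case empty then show ?case using locR_const[of R 0] by simp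
next
  case (insert x I)
  have 1: "locR R (F x)" using insert.prems by blast
  have 2: "locR R (\<lambda>a b n. \<Sum>i\<in>I. F i a b n)" using insert.IH insert.prems by blast
  have "locR R (\<lambda>a b n. F x a b n + (\<Sum>i\<in>I. F i a b n))" by (rule locR_add[OF 1 2])
  then show ?case using insert.hyps by simp
qed

lemma loc_const: "loc (\<lambda>a b n. c)" unfolding loc_def using locR_const by blast
lemma loc_a: "loc (\<lambda>a b. a)" unfolding loc_def using locR_a by blast
lemma loc_b: "loc (\<lambda>a b. b)" unfolding loc_def using locR_b by blast

lemma loc_common:
  assumes "loc F" "loc G" obtains R where "locR R F" "locR R G"
proof -
  obtain R1 R2 where 1: "locR R1 F" and 2: "locR R2 G" using assms unfolding loc_def by blast
  have "locR (max R1 R2) F" by (rule locR_mono[OF 1]) simp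
  moreover have "locR (max R1 R2) G" by (rule locR_mono[OF 2]) simp
  ultimately show ?thesis using that by blast
qed

lemma loc_add: "loc F \<Longrightarrow> loc G \<Longrightarrow> loc (\<lambda>a b n. F a b n + G a b n)"
  by (erule loc_common, assumption) (unfold loc_def, rule exI, erule (1) locR_add)
lemma loc_mult: "loc F \<Longrightarrow> loc G \<Longrightarrow> loc (\<lambda>a b n. F a b n * G a b n)"
  by (erule loc_common, assumption) (unfold loc_def, rule exI, erule (1) locR_mult)
lemma loc_shift: "loc F \<Longrightarrow> loc (\<lambda>a b n. F a b (n + k))"
  unfolding loc_def using locR_shift by blast
lemma loc_shiftm: "loc F \<Longrightarrow> loc (\<lambda>a b n. F a b (n - k))"
  using loc_shift[of F "-k"] by simp
lemma loc_cmult: "loc F \<Longrightarrow> loc (\<lambda>a b n. c * F a b n)"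
  using loc_mult[OF loc_const[of c]] by simp
lemma loc_uminus: "loc F \<Longrightarrow> loc (\<lambda>a b n. - F a b n)"
  using loc_cmult[of F "-1"] by simp
lemma loc_diff: "loc F \<Longrightarrow> loc G \<Longrightarrow> loc (\<lambda>a b n. F a b n - G a b n)"
  using loc_add[of F "\<lambda>a b n. - G a b n"] loc_uminus[of G] by simp

lemma loc_sum:
  assumes "finite I" "\<And>i. i \<in> I \<Longrightarrow> loc (F i)"
  shows "loc (\<lambda>a b n. \<Sum>i\<in>I. F i a b n)"
proof -
  have "\<forall>i\<in>I. \<exists>R. locR R (F i)" using assms(2) unfolding loc_def by blast
  then obtain Rf where Rf: "\<And>i. i \<in> I \<Longrightarrow> locR (Rf i) (F i)" by metis
  define R where "R = Max (Rf ` I)"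
  have "\<And>i. i \<in> I \<Longrightarrow> locR R (F i)"
  proof -
    fix i assume i: "i \<in> I"
    have "Rf i \<le> R" unfolding R_def using assms(1) i by (intro Max_ge) auto
    then show "locR R (F i)" using locR_mono Rf[OF i] by blast
  qed
  then show ?thesis unfolding loc_def using locR_sum[OF assms(1)] by blast
qed


lemma AL_app: "\<exists>x. AL_hat_list s a b (Suc l) = AL_hat_list s a b l @ [x]"
  by (simp only: AL_hat_list.simps Let_def) (rule exI, rule refl)

declare AL_hat_list.simps(2)[simp del]

lemma AL_len: "length (AL_hat_list s a b l) = Suc l"
proof (induction l)
  case 0 then show ?case by simp
next
  case (Suc l)
  obtain x where "AL_hat_list s a b (Suc l) = AL_hat_list s a b l @ [x]" using AL_app by blast
  then show ?case using Suc.IH by simp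
qed

lemma AL_stable: "k \<le> l \<Longrightarrow> AL_hat_list s a b l ! k = AL_hat_list s a b k ! k"
proof (induction l)
  case 0 then show ?case by simp
next
  case (Suc l)
  show ?case
  proof (cases "k \<le> l")
    case True
    obtain x where x: "AL_hat_list s a b (Suc l) = AL_hat_list s a b l @ [x]" using AL_app by blast
    have "AL_hat_list s a b (Suc l) ! k = AL_hat_list s a b l ! k"
      unfolding x using True by (simp add: nth_append AL_len)
    then show ?thesis using Suc.IH True by simp
  next
    case False
    then have "k = Suc l" using Suc.prems by simp
    then show ?thesis by simp
  qed
qed

lemma nth_Suc_app: "length xs = Suc l \<Longrightarrow> (xs @ [x]) ! Suc l = x"
  by (simp add: nth_append)

lemma AL_f_nth: assumes "k \<le> l" shows "fst (AL_hat_list s a b l ! k) = AL_hat_f s a b k"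
  unfolding AL_hat_f_def AL_stable[OF assms] by (rule refl)
lemma AL_g_nth: assumes "k \<le> l" shows "fst (snd (AL_hat_list s a b l ! k)) = AL_hat_g s a b k"
  unfolding AL_hat_g_def AL_stable[OF assms] by (rule refl)
lemma AL_h_nth: assumes "k \<le> l" shows "snd (snd (AL_hat_list s a b l ! k)) = AL_hat_h s a b k"
  unfolding AL_hat_h_def AL_stable[OF assms] by (rule refl)

lemma AL_g_nth': "Suc 0 \<le> k \<Longrightarrow> fst (snd (AL_hat_list s a b l ! (Suc l - k))) = AL_hat_g s a b (Suc l - k)"
  by (rule AL_g_nth) simp

lemma S1: "(\<Sum>x\<le>l. g x * snd (snd (AL_hat_list s a b l ! x)) n) = (\<Sum>x\<le>l. g x * AL_hat_h s a b x n)"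
  by (intro sum.cong refl) (simp add: AL_h_nth)
lemma S2: "(\<Sum>x\<in>{Suc 0..l}. fst (snd (AL_hat_list s a b l ! (Suc l - x))) n * fst (snd (AL_hat_list s a b l ! x)) n)
   = (\<Sum>x\<in>{Suc 0..l}. AL_hat_g s a b (Suc l - x) n * AL_hat_g s a b x n)"
  by (intro sum.cong refl) (simp add: AL_g_nth AL_g_nth')

lemma AL_g_Suc: "AL_hat_g s a b (Suc l) = (\<lambda>n. (\<Sum>k\<le>l. AL_hat_f s a b (l - k) n * AL_hat_h s a b k n)
     - (\<Sum>k\<in>{1..l}. AL_hat_g s a b (l + 1 - k) n * AL_hat_g s a b k n))"
  unfolding AL_hat_g_def[of s a b "Suc l"]
  apply (simp only: AL_hat_list.simps Let_def nth_Suc_app[OF AL_len] fst_conv snd_conv)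
  by (simp add: AL_f_nth AL_h_nth S1 S2)

lemma AL_f_Suc: "AL_hat_f s a b (Suc l) = (if s then (\<lambda>n. AL_hat_f s a b l (n + 1) - a (n + 1) * (AL_hat_g s a b (Suc l) (n + 1) + AL_hat_g s a b (Suc l) n))
                else (\<lambda>n. AL_hat_f s a b l (n - 1) + a n * (AL_hat_g s a b (Suc l) n + AL_hat_g s a b (Suc l) (n - 1))))"
  unfolding AL_hat_f_def[of s a b "Suc l"] AL_g_Suc
  apply (simp only: AL_hat_list.simps Let_def nth_Suc_app[OF AL_len] fst_conv snd_conv)
  by (simp add: AL_f_nth AL_h_nth S1 S2)

lemma AL_h_Suc: "AL_hat_h s a b (Suc l) = (if s then (\<lambda>n. AL_hat_h s a b l (n - 1) + b n * (AL_hat_g s a b (Suc l) n + AL_hat_g s a b (Suc l) (n - 1)))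
                else (\<lambda>n. AL_hat_h s a b l (n + 1) - b (n + 1) * (AL_hat_g s a b (Suc l) (n + 1) + AL_hat_g s a b (Suc l) n)))"
  unfolding AL_hat_h_def[of s a b "Suc l"] AL_g_Suc
  apply (simp only: AL_hat_list.simps Let_def nth_Suc_app[OF AL_len] fst_conv snd_conv)
  by (simp add: AL_f_nth AL_h_nth S1 S2)

lemma AL_0: "AL_hat_f s a b 0 = (if s then (\<lambda>n. - a (n + 1)) else (\<lambda>n. a n))"
  "AL_hat_g s a b 0 = (\<lambda>n. 1/2)"
  "AL_hat_h s a b 0 = (if s then (\<lambda>n. b n) else (\<lambda>n. - b (n + 1)))"
  by (simp_all add: AL_hat_f_def AL_hat_g_def AL_hat_h_def)

lemma loc_sh1: "loc F \<Longrightarrow> loc (\<lambda>a b n. F a b (n + 1))" by (rule loc_shift)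
lemma loc_shm1: "loc F \<Longrightarrow> loc (\<lambda>a b n. F a b (n - 1))" by (rule loc_shiftm)
lemma loc_a1: "loc (\<lambda>a b n. a (n + 1))" using loc_sh1[OF loc_a] .
lemma loc_b1: "loc (\<lambda>a b n. b (n + 1))" using loc_sh1[OF loc_b] .
lemma loc_a0: "loc (\<lambda>a b n. a n)" using loc_a by simp
lemma loc_b0: "loc (\<lambda>a b n. b n)" using loc_b by simp

lemma loc_hat: "\<forall>k\<le>l. loc (\<lambda>a b. AL_hat_f s a b k) \<and> loc (\<lambda>a b. AL_hat_g s a b k) \<and> loc (\<lambda>a b. AL_hat_h s a b k)"
proof (induction l)
  case 0
  show ?case
    by (cases s) (auto simp: AL_0 intro!: loc_const loc_a0 loc_b0 loc_a1 loc_b1 loc_uminus)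
next
  case (Suc l)
  have IH: "\<And>k. k \<le> l \<Longrightarrow> loc (\<lambda>a b. AL_hat_f s a b k) \<and> loc (\<lambda>a b. AL_hat_g s a b k) \<and> loc (\<lambda>a b. AL_hat_h s a b k)"
    using Suc.IH by blast
  have Fk: "\<And>k. k \<le> l \<Longrightarrow> loc (\<lambda>a b n. AL_hat_f s a b k n)" using IH by simp
  have Gk: "\<And>k. k \<le> l \<Longrightarrow> loc (\<lambda>a b n. AL_hat_g s a b k n)" using IH by simp
  have Hk: "\<And>k. k \<le> l \<Longrightarrow> loc (\<lambda>a b n. AL_hat_h s a b k n)" using IH by simp
  have G: "loc (\<lambda>a b n. AL_hat_g s a b (Suc l) n)"
    unfolding AL_g_Suc
    by (intro loc_diff loc_sum loc_mult Fk Gk Hk) auto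
  have G1: "loc (\<lambda>a b n. AL_hat_g s a b (Suc l) (n + 1))" using loc_sh1[OF G] .
  have Gm1: "loc (\<lambda>a b n. AL_hat_g s a b (Suc l) (n - 1))" using loc_shm1[OF G] .
  have F1: "loc (\<lambda>a b n. AL_hat_f s a b l (n + 1))" using loc_sh1[OF Fk[of l]] by simp
  have Fm1: "loc (\<lambda>a b n. AL_hat_f s a b l (n - 1))" using loc_shm1[OF Fk[of l]] by simp
  have H1: "loc (\<lambda>a b n. AL_hat_h s a b l (n + 1))" using loc_sh1[OF Hk[of l]] by simp
  have Hm1: "loc (\<lambda>a b n. AL_hat_h s a b l (n - 1))" using loc_shm1[OF Hk[of l]] by simp
  have F: "loc (\<lambda>a b. AL_hat_f s a b (Suc l))"
  proof (cases s)
    case True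
    have e: "(\<lambda>a b. AL_hat_f s a b (Suc l)) = (\<lambda>a b n. AL_hat_f s a b l (n + 1) - a (n + 1) * (AL_hat_g s a b (Suc l) (n + 1) + AL_hat_g s a b (Suc l) n))"
      using True by (simp add: AL_f_Suc)
    show ?thesis unfolding e by (intro loc_add loc_diff loc_mult F1 G G1 loc_a1)
  next
    case False
    have e: "(\<lambda>a b. AL_hat_f s a b (Suc l)) = (\<lambda>a b n. AL_hat_f s a b l (n - 1) + a n * (AL_hat_g s a b (Suc l) n + AL_hat_g s a b (Suc l) (n - 1)))"
      using False by (simp add: AL_f_Suc)
    show ?thesis unfolding e by (intro loc_add loc_diff loc_mult Fm1 G Gm1 loc_a0)
  qed
  have H: "loc (\<lambda>a b. AL_hat_h s a b (Suc l))"
  proof (cases s)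
    case True
    have e: "(\<lambda>a b. AL_hat_h s a b (Suc l)) = (\<lambda>a b n. AL_hat_h s a b l (n - 1) + b n * (AL_hat_g s a b (Suc l) n + AL_hat_g s a b (Suc l) (n - 1)))"
      using True by (simp add: AL_h_Suc)
    show ?thesis unfolding e by (intro loc_add loc_diff loc_mult Hm1 G Gm1 loc_b0)
  next
    case False
    have e: "(\<lambda>a b. AL_hat_h s a b (Suc l)) = (\<lambda>a b n. AL_hat_h s a b l (n + 1) - b (n + 1) * (AL_hat_g s a b (Suc l) (n + 1) + AL_hat_g s a b (Suc l) n))"
      using False by (simp add: AL_h_Suc)
    show ?thesis unfolding e by (intro loc_add loc_diff loc_mult H1 G G1 loc_b1)
  qed
  show ?case using IH F G H by (auto simp: le_Suc_eq)
qed


definition Pa :: "nat \<Rightarrow> nat \<Rightarrow> (nat \<Rightarrow> complex) \<Rightarrow> (nat \<Rightarrow> complex) \<Rightarrow> seq \<Rightarrow> seq \<Rightarrow> seq" where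
  "Pa rm rp cm cp a b n = \<i> * (a n * (AL_g True cp a b rp n + AL_g False cm a b rm (n - 1))
       - AL_fm1 True cp a b rp n + AL_fm1 False cm a b rm (n - 1))"

definition Pb :: "nat \<Rightarrow> nat \<Rightarrow> (nat \<Rightarrow> complex) \<Rightarrow> (nat \<Rightarrow> complex) \<Rightarrow> seq \<Rightarrow> seq \<Rightarrow> seq" where
  "Pb rm rp cm cp a b n = \<i> * (- (b n * (AL_g True cp a b rp (n - 1) + AL_g False cm a b rm n))
       + AL_hm1 False cm a b rm n - AL_hm1 True cp a b rp (n - 1))"

lemma loc_hf: "loc (\<lambda>a b n. AL_hat_f s a b k n)" using loc_hat[of k s] by auto
lemma loc_hg: "loc (\<lambda>a b n. AL_hat_g s a b k n)" using loc_hat[of k s] by auto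
lemma loc_hh: "loc (\<lambda>a b n. AL_hat_h s a b k n)" using loc_hat[of k s] by auto

lemma loc_g: "loc (\<lambda>a b n. AL_g s c a b l n)"
  unfolding AL_g_def by (intro loc_sum loc_cmult loc_hg) auto
lemma loc_f: "loc (\<lambda>a b n. AL_f s c a b l n)"
  unfolding AL_f_def by (intro loc_sum loc_cmult loc_hf) auto
lemma loc_h: "loc (\<lambda>a b n. AL_h s c a b l n)"
  unfolding AL_h_def by (intro loc_sum loc_cmult loc_hh) auto
lemma loc_fm1: "loc (\<lambda>a b n. AL_fm1 s c a b r n)"
  unfolding AL_fm1_def by (cases "r = 0") (simp_all add: loc_const loc_f)
lemma loc_hm1: "loc (\<lambda>a b n. AL_hm1 s c a b r n)"
  unfolding AL_hm1_def by (cases "r = 0") (simp_all add: loc_const loc_h)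

lemma loc_g_m1: "loc (\<lambda>a b n. AL_g s c a b l (n - 1))" by (rule loc_shm1[OF loc_g])
lemma loc_fm1_m1: "loc (\<lambda>a b n. AL_fm1 s c a b r (n - 1))" by (rule loc_shm1[OF loc_fm1])
lemma loc_hm1_m1: "loc (\<lambda>a b n. AL_hm1 s c a b r (n - 1))" by (rule loc_shm1[OF loc_hm1])

lemma loc_Pa: "loc (Pa rm rp cm cp)"
proof -
  have "loc (\<lambda>a b n. \<i> * (a n * (AL_g True cp a b rp n + AL_g False cm a b rm (n - 1))
       - AL_fm1 True cp a b rp n + AL_fm1 False cm a b rm (n - 1)))"
    by (intro loc_cmult loc_add loc_diff loc_mult loc_a0 loc_g loc_g_m1 loc_fm1 loc_fm1_m1)
  then show ?thesis unfolding Pa_def[abs_def] .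
qed

lemma loc_Pb: "loc (Pb rm rp cm cp)"
proof -
  have "loc (\<lambda>a b n. \<i> * (- (b n * (AL_g True cp a b rp (n - 1) + AL_g False cm a b rm n))
       + AL_hm1 False cm a b rm n - AL_hm1 True cp a b rp (n - 1)))"
    by (intro loc_cmult loc_add loc_diff loc_uminus loc_mult loc_b0 loc_g loc_g_m1 loc_hm1 loc_hm1_m1)
  then show ?thesis unfolding Pb_def[abs_def] .
qed

lemma sol_eqs:
  assumes "AL_solution rm rp cm cp I \<alpha> \<beta>"
  shows "(\<exists>M. \<forall>t\<in>I. \<forall>n. norm (\<alpha> t n) \<le> M \<and> norm (\<beta> t n) \<le> M) \<and>
     (\<exists>\<alpha>' \<beta>'. \<forall>n. \<forall>t\<in>I.
           ((\<lambda>s. \<alpha> s n) has_vector_derivative \<alpha>' t n) (at t) \<and>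
           ((\<lambda>s. \<beta> s n) has_vector_derivative \<beta>' t n) (at t) \<and>
           \<alpha>' t n = Pa rm rp cm cp (\<alpha> t) (\<beta> t) n \<and> \<beta>' t n = Pb rm rp cm cp (\<alpha> t) (\<beta> t) n)"
proof -
  from assms obtain M \<alpha>' \<beta>' where M: "\<forall>t\<in>I. \<forall>n. norm (\<alpha> t n) \<le> M \<and> norm (\<beta> t n) \<le> M"
    and D: "\<forall>n. (\<forall>t\<in>I.
           ((\<lambda>s. \<alpha> s n) has_vector_derivative \<alpha>' t n) (at t) \<and>
           ((\<lambda>s. \<beta> s n) has_vector_derivative \<beta>' t n) (at t) \<and>
           - \<i> * \<alpha>' t n
             - \<alpha> t n * (AL_g True cp (\<alpha> t) (\<beta> t) rp n + AL_g False cm (\<alpha> t) (\<beta> t) rm (n - 1))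
             + AL_fm1 True cp (\<alpha> t) (\<beta> t) rp n - AL_fm1 False cm (\<alpha> t) (\<beta> t) rm (n - 1) = 0 \<and>
           - \<i> * \<beta>' t n
             + \<beta> t n * (AL_g True cp (\<alpha> t) (\<beta> t) rp (n - 1) + AL_g False cm (\<alpha> t) (\<beta> t) rm n)
             - AL_hm1 False cm (\<alpha> t) (\<beta> t) rm n + AL_hm1 True cp (\<alpha> t) (\<beta> t) rp (n - 1) = 0)"
    unfolding AL_solution_def by blast
  have "\<forall>n. \<forall>t\<in>I.
           ((\<lambda>s. \<alpha> s n) has_vector_derivative \<alpha>' t n) (at t) \<and>
           ((\<lambda>s. \<beta> s n) has_vector_derivative \<beta>' t n) (at t) \<and>
           \<alpha>' t n = Pa rm rp cm cp (\<alpha> t) (\<beta> t) n \<and> \<beta>' t n = Pb rm rp cm cp (\<alpha> t) (\<beta> t) n"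
  proof (intro allI ballI conjI)
    fix n t assume t: "t \<in> I"
    note d = D[rule_format, OF t, of n]
    show "((\<lambda>s. \<alpha> s n) has_vector_derivative \<alpha>' t n) (at t)" using d by blast
    show "((\<lambda>s. \<beta> s n) has_vector_derivative \<beta>' t n) (at t)" using d by blast
    have e1: "- \<i> * \<alpha>' t n
             - \<alpha> t n * (AL_g True cp (\<alpha> t) (\<beta> t) rp n + AL_g False cm (\<alpha> t) (\<beta> t) rm (n - 1))
             + AL_fm1 True cp (\<alpha> t) (\<beta> t) rp n - AL_fm1 False cm (\<alpha> t) (\<beta> t) rm (n - 1) = 0" using d by blast
    have e2: "- \<i> * \<beta>' t n
             + \<beta> t n * (AL_g True cp (\<alpha> t) (\<beta> t) rp (n - 1) + AL_g False cm (\<alpha> t) (\<beta> t) rm n)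
             - AL_hm1 False cm (\<alpha> t) (\<beta> t) rm n + AL_hm1 True cp (\<alpha> t) (\<beta> t) rp (n - 1) = 0" using d by blast
    show "\<alpha>' t n = Pa rm rp cm cp (\<alpha> t) (\<beta> t) n"
    proof -
      have "\<alpha>' t n = \<i> * (- \<i> * \<alpha>' t n)" by (simp add: algebra_simps)
      also have "- \<i> * \<alpha>' t n = \<alpha> t n * (AL_g True cp (\<alpha> t) (\<beta> t) rp n + AL_g False cm (\<alpha> t) (\<beta> t) rm (n - 1))
             - AL_fm1 True cp (\<alpha> t) (\<beta> t) rp n + AL_fm1 False cm (\<alpha> t) (\<beta> t) rm (n - 1)"
        using e1 by (simp add: algebra_simps)
      finally show ?thesis unfolding Pa_def .
    qed
    show "\<beta>' t n = Pb rm rp cm cp (\<alpha> t) (\<beta> t) n"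
    proof -
      have "\<beta>' t n = \<i> * (- \<i> * \<beta>' t n)" by (simp add: algebra_simps)
      also have "- \<i> * \<beta>' t n = - (\<beta> t n * (AL_g True cp (\<alpha> t) (\<beta> t) rp (n - 1) + AL_g False cm (\<alpha> t) (\<beta> t) rm n))
             + AL_hm1 False cm (\<alpha> t) (\<beta> t) rm n - AL_hm1 True cp (\<alpha> t) (\<beta> t) rp (n - 1)"
        using e2 by (simp add: algebra_simps)
      finally show ?thesis unfolding Pb_def .
    qed
  qed
  then show ?thesis using M by blast
qed


lemma pow_fact_tendsto0: "(\<lambda>m. (c::real) ^ m / fact m) \<longlonglongrightarrow> 0"
proof -
  have "summable (\<lambda>m. c ^ m /\<^sub>R fact m)" by (rule summable_exp_generic)
  then have "(\<lambda>m. c ^ m /\<^sub>R fact m) \<longlonglongrightarrow> 0" by (rule summable_LIMSEQ_zero)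
  then show ?thesis by (simp add: divide_inverse_commute)
qed

lemma core_fwd:
  fixes x y x' y' :: "real \<Rightarrow> int \<Rightarrow> complex" and W g :: "int \<Rightarrow> real"
  assumes dx: "\<And>s n. s \<in> {t0..<t1} \<Longrightarrow> ((\<lambda>r. x r n) has_vector_derivative x' s n) (at s)"
    and dy: "\<And>s n. s \<in> {t0..<t1} \<Longrightarrow> ((\<lambda>r. y r n) has_vector_derivative y' s n) (at s)"
    and ub: "\<And>s n. s \<in> {t0..<t1} \<Longrightarrow> norm (x s n) + norm (y s n) \<le> Mu"
    and bx: "\<And>s n. s \<in> {t0..<t1} \<Longrightarrow> norm (x' s n) \<le> L * (\<Sum>j\<in>{-int R..int R}. norm (x s (n+j)) + norm (y s (n+j))) + g n"
    and by': "\<And>s n. s \<in> {t0..<t1} \<Longrightarrow> norm (y' s n) \<le> L * (\<Sum>j\<in>{-int R..int R}. norm (x s (n+j)) + norm (y s (n+j))) + g n"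
    and L0: "0 \<le> L" and g0: "\<And>n. 0 \<le> g n" and lam0: "0 \<le> lam"
    and W0: "\<And>n. norm (x t0 n) + norm (y t0 n) \<le> W n"
    and Wsup: "\<And>n. L * (\<Sum>j\<in>{-int R..int R}. W (n+j)) + g n \<le> lam/2 * W n"
  shows "\<And>s n. s \<in> {t0..<t1} \<Longrightarrow> norm (x s n) + norm (y s n) \<le> exp (lam * (s - t0)) * W n"
proof -
  define u where "u n s = norm (x s n) + norm (y s n)" for n s
  define Lam where "Lam = 2 * L * (2 * real R + 1)"
  have Lam0: "0 \<le> Lam" unfolding Lam_def using L0 by simp
  have Wnn: "0 \<le> W n" for n using W0[of n] norm_ge_zero[of "x t0 n"] norm_ge_zero[of "y t0 n"] by linarith
  have Mu0: "0 \<le> Mu" if "t0 < t1"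
  proof -
    have "t0 \<in> {t0..<t1}" using that by simp
    then show ?thesis using ub[of t0 0] norm_ge_zero[of "x t0 0"] norm_ge_zero[of "y t0 0"] by linarith
  qed
  have card: "card {-int R..int R} = 2 * R + 1" by simp
  have cont_x: "continuous_on {t0..s} (\<lambda>r. x r n)" if "s \<in> {t0..<t1}" for s n
    using that by (intro continuous_at_imp_continuous_on ballI has_vector_derivative_continuous[OF dx]) auto
  have cont_y: "continuous_on {t0..s} (\<lambda>r. y r n)" if "s \<in> {t0..<t1}" for s n
    using that by (intro continuous_at_imp_continuous_on ballI has_vector_derivative_continuous[OF dy]) auto
  have claim: "\<forall>s\<in>{t0..<t1}. \<forall>n. u n s \<le> exp (lam * (s - t0)) * W n + Mu * ((Lam * (s - t0)) ^ m / fact m)" for m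
  proof (induction m)
    case 0
    show ?case
    proof (intro ballI allI)
      fix s n assume s: "s \<in> {t0..<t1}"
      have "0 \<le> exp (lam * (s - t0)) * W n" using Wnn[of n] by simp
      then show "u n s \<le> exp (lam * (s - t0)) * W n + Mu * ((Lam * (s - t0)) ^ 0 / fact 0)"
        using ub[OF s, of n] unfolding u_def by simp
    qed
  next
    case (Suc m)
    show ?case
    proof (intro ballI allI)
      fix s n assume s: "s \<in> {t0..<t1}"
      show "u n s \<le> exp (lam * (s - t0)) * W n + Mu * ((Lam * (s - t0)) ^ Suc m / fact (Suc m))"
      proof (cases "s = t0")
        case True
        then show ?thesis using W0[of n] unfolding u_def by simp
      next
        case False
        then have st: "t0 < s" using s by simp
        have Mu: "0 \<le> Mu" using Mu0 s by simp
        define phi where "phi r = (exp (lam * (r - t0)) * W n + Mu * ((Lam * (r - t0)) ^ Suc m / fact (Suc m))) / 2" for r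
        define phi' where "phi' r = (lam * exp (lam * (r - t0)) * W n + Mu * (Lam * ((Lam * (r - t0)) ^ m / fact m))) / 2" for r
        have dphi: "(phi has_vector_derivative phi' r) (at r)" for r
        proof -
          have "(phi has_real_derivative phi' r) (at r)"
          proof -
            have fs: "fact (Suc m) = real (Suc m) * fact m" by simp
            have "((\<lambda>r. (exp (lam * (r - t0)) * W n + Mu * ((Lam * (r - t0)) ^ Suc m / fact (Suc m))) / 2) has_real_derivative
                  ((exp (lam * (r - t0)) * (lam * (1 - 0)) * W n + Mu * ((real (Suc m) * (Lam * (r - t0)) ^ (Suc m - 1) * (Lam * (1 - 0))) / fact (Suc m))) / 2)) (at r)"
              by (intro derivative_eq_intros refl | simp)+
            moreover have "(exp (lam * (r - t0)) * (lam * (1 - 0)) * W n + Mu * ((real (Suc m) * (Lam * (r - t0)) ^ (Suc m - 1) * (Lam * (1 - 0))) / fact (Suc m))) / 2 = phi' r"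
            proof -
              have k: "Mu * ((real (Suc m) * (Lam * (r - t0)) ^ (Suc m - 1) * (Lam * (1 - 0))) / fact (Suc m)) = Mu * (Lam * ((Lam * (r - t0)) ^ m / fact m))"
                unfolding fs by simp
              show ?thesis unfolding phi'_def k by (simp add: algebra_simps)
            qed
            ultimately show ?thesis unfolding phi_def[abs_def] by simp
          qed
          then show ?thesis by (simp add: has_real_derivative_iff_has_vector_derivative)
        qed
        have bound: "L * (\<Sum>j\<in>{-int R..int R}. u (n+j) r) + g n \<le> phi' r" if r: "t0 < r" "r < s" for r
        proof -
          have rJ: "r \<in> {t0..<t1}" using r s by auto
          define E where "E = exp (lam * (r - t0))"
          define c where "c = (Lam * (r - t0)) ^ m / fact m"
          have E1: "1 \<le> E" unfolding E_def using lam0 r by simp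
          have c0: "0 \<le> c" unfolding c_def using Lam0 r by simp
          have "(\<Sum>j\<in>{-int R..int R}. u (n+j) r) \<le> (\<Sum>j\<in>{-int R..int R}. E * W (n+j) + Mu * c)"
            using Suc.IH rJ unfolding E_def c_def by (intro sum_mono) blast
          also have "\<dots> = E * (\<Sum>j\<in>{-int R..int R}. W (n+j)) + (2 * real R + 1) * (Mu * c)"
            by (simp add: sum.distrib sum_distrib_left card)
          finally have S: "(\<Sum>j\<in>{-int R..int R}. u (n+j) r) \<le> E * (\<Sum>j\<in>{-int R..int R}. W (n+j)) + (2 * real R + 1) * (Mu * c)" .
          have "L * (\<Sum>j\<in>{-int R..int R}. u (n+j) r) + g n \<le> L * (E * (\<Sum>j\<in>{-int R..int R}. W (n+j)) + (2 * real R + 1) * (Mu * c)) + E * g n"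
            using S L0 E1 g0[of n] by (intro add_mono mult_left_mono) (auto intro: mult_right_mono[of 1 E "g n", simplified])
          also have "\<dots> = E * (L * (\<Sum>j\<in>{-int R..int R}. W (n+j)) + g n) + Lam / 2 * (Mu * c)"
            unfolding Lam_def by (simp add: algebra_simps)
          also have "\<dots> \<le> E * (lam / 2 * W n) + Lam / 2 * (Mu * c)"
            using Wsup[of n] E1 by (intro add_right_mono mult_left_mono) auto
          also have "\<dots> = phi' r" unfolding phi'_def E_def c_def by (simp add: algebra_simps)
          finally show ?thesis .
        qed
        have ex: "norm (x s n - x t0 n) \<le> phi s - phi t0"
        proof (rule differentiable_bound_general[OF st cont_x[OF s]])
          show "continuous_on {t0..s} phi" using dphi
            by (intro continuous_at_imp_continuous_on ballI has_vector_derivative_continuous) auto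
          show "\<And>r. t0 < r \<Longrightarrow> r < s \<Longrightarrow> ((\<lambda>r. x r n) has_vector_derivative x' r n) (at r)"
            using s by (intro dx) auto
          show "\<And>r. t0 < r \<Longrightarrow> r < s \<Longrightarrow> (phi has_vector_derivative phi' r) (at r)" by (rule dphi)
          show "norm (x' r n) \<le> phi' r" if "t0 < r" "r < s" for r
            using bx[of r n] bound[OF that] that s unfolding u_def by fastforce
        qed
        have ey: "norm (y s n - y t0 n) \<le> phi s - phi t0"
        proof (rule differentiable_bound_general[OF st cont_y[OF s]])
          show "continuous_on {t0..s} phi" using dphi
            by (intro continuous_at_imp_continuous_on ballI has_vector_derivative_continuous) auto
          show "\<And>r. t0 < r \<Longrightarrow> r < s \<Longrightarrow> ((\<lambda>r. y r n) has_vector_derivative y' r n) (at r)"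
            using s by (intro dy) auto
          show "\<And>r. t0 < r \<Longrightarrow> r < s \<Longrightarrow> (phi has_vector_derivative phi' r) (at r)" by (rule dphi)
          show "norm (y' r n) \<le> phi' r" if "t0 < r" "r < s" for r
            using by'[of r n] bound[OF that] that s unfolding u_def by fastforce
        qed
        have t1: "norm (x s n) \<le> norm (x t0 n) + norm (x s n - x t0 n)" by (metis norm_triangle_sub add.commute)
        have t2: "norm (y s n) \<le> norm (y t0 n) + norm (y s n - y t0 n)" by (metis norm_triangle_sub add.commute)
        have p0: "phi t0 = W n / 2" unfolding phi_def by simp
        have "u n s \<le> (norm (x t0 n) + norm (x s n - x t0 n)) + (norm (y t0 n) + norm (y s n - y t0 n))"
          unfolding u_def using t1 t2 by (rule add_mono)
        also have "\<dots> \<le> (norm (x t0 n) + (phi s - phi t0)) + (norm (y t0 n) + (phi s - phi t0))"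
          using ex ey by (intro add_mono order_refl)
        also have "\<dots> = (norm (x t0 n) + norm (y t0 n)) + 2 * phi s - W n" using p0 by simp
        also have "\<dots> \<le> 2 * phi s" using W0[of n] by simp
        finally have "u n s \<le> 2 * phi s" .
        moreover have "2 * phi s = exp (lam * (s - t0)) * W n + Mu * ((Lam * (s - t0)) ^ Suc m / fact (Suc m))"
          unfolding phi_def by simp
        ultimately show ?thesis by linarith
      qed
    qed
  qed
  fix s n assume s: "s \<in> {t0..<t1}"
  have lim: "(\<lambda>m. exp (lam * (s - t0)) * W n + Mu * ((Lam * (s - t0)) ^ m / fact m)) \<longlonglongrightarrow> exp (lam * (s - t0)) * W n + Mu * 0"
    by (intro tendsto_intros pow_fact_tendsto0)
  have "u n s \<le> exp (lam * (s - t0)) * W n + Mu * 0"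
    by (rule tendsto_lowerbound[OF lim]) (use claim s in \<open>auto\<close>)
  then show "norm (x s n) + norm (y s n) \<le> exp (lam * (s - t0)) * W n" unfolding u_def by simp
qed


definition sc :: "real \<Rightarrow> (int \<Rightarrow> real) \<Rightarrow> int \<Rightarrow> real" where
  "sc q f n = (SUP k. q ^ nat \<bar>n - k\<bar> * f k)"

locale scset =
  fixes q :: real and f :: "int \<Rightarrow> real" and Mf :: real
  assumes q0: "0 < q" and q1: "q \<le> 1" and f0: "\<And>k. 0 \<le> f k" and fM: "\<And>k. f k \<le> Mf"
begin

lemma bdd: "bdd_above (range (\<lambda>k. q ^ nat \<bar>n - k\<bar> * f k))"
proof (rule bdd_aboveI2)
  fix k
  have "q ^ nat \<bar>n - k\<bar> \<le> 1" using q0 q1 by (simp add: power_le_one)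
  then have "q ^ nat \<bar>n - k\<bar> * f k \<le> 1 * f k" using f0[of k] by (intro mult_right_mono) auto
  then show "q ^ nat \<bar>n - k\<bar> * f k \<le> Mf" using fM[of k] by simp
qed

lemma upper: "q ^ nat \<bar>n - k\<bar> * f k \<le> sc q f n"
  unfolding sc_def by (rule cSUP_upper[OF UNIV_I bdd])

lemma least: "(\<And>k. q ^ nat \<bar>n - k\<bar> * f k \<le> X) \<Longrightarrow> sc q f n \<le> X"
  unfolding sc_def by (rule cSUP_least) auto

lemma ge: "f n \<le> sc q f n"
  using upper[of n n] by simp

lemma nonneg: "0 \<le> sc q f n"
  using ge[of n] f0[of n] by linarith

lemma shift:
  assumes "\<bar>j\<bar> \<le> int R"
  shows "q ^ R * sc q f (n + j) \<le> sc q f n"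
proof -
  have "sc q f (n + j) \<le> sc q f n / q ^ R"
  proof (rule least)
    fix k
    have d: "nat \<bar>n - k\<bar> \<le> R + nat \<bar>n + j - k\<bar>" using assms by linarith
    have "q ^ R * (q ^ nat \<bar>n + j - k\<bar> * f k) = q ^ (R + nat \<bar>n + j - k\<bar>) * f k"
      by (simp add: power_add)
    also have "\<dots> \<le> q ^ nat \<bar>n - k\<bar> * f k"
      using d q0 q1 f0[of k] by (intro mult_right_mono power_decreasing) auto
    also have "\<dots> \<le> sc q f n" by (rule upper)
    finally show "q ^ nat \<bar>n + j - k\<bar> * f k \<le> sc q f n / q ^ R"
      using q0 by (simp add: field_simps)
  qed
  then show ?thesis using q0 by (simp add: field_simps)
qed

lemma inf_bound:
  assumes wpos: "\<And>k. 0 < w k" and wK: "\<And>k. w n \<le> K ^ nat \<bar>n - k\<bar> * w k"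
    and K0: "0 \<le> K" and Kq: "K * q \<le> 1" and B: "\<And>k. w k * f k \<le> B"
  shows "w n * sc q f n \<le> B"
proof -
  have "sc q f n \<le> B / w n"
  proof (rule least)
    fix k
    define d where "d = nat \<bar>n - k\<bar>"
    have "w n * (q ^ d * f k) \<le> (K ^ d * w k) * (q ^ d * f k)"
      using wK[of k] q0 f0[of k] unfolding d_def by (intro mult_right_mono) auto
    also have "\<dots> = (K * q) ^ d * (w k * f k)" by (simp add: power_mult_distrib algebra_simps)
    also have "\<dots> \<le> 1 * (w k * f k)"
      using Kq K0 q0 wpos[of k] f0[of k] by (intro mult_right_mono power_le_one) auto
    also have "\<dots> \<le> B" using B[of k] by simp
    finally show "q ^ nat \<bar>n - k\<bar> * f k \<le> B / w n" using wpos[of n] unfolding d_def by (simp add: field_simps)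
  qed
  then show ?thesis using wpos[of n] by (simp add: field_simps)
qed

end

lemma geo_nat: "finite I \<Longrightarrow> (\<Sum>i\<in>I. (1/2::real) ^ i) \<le> 2"
proof -
  assume I: "finite I"
  have "(\<Sum>i\<in>I. (1/2::real) ^ i) \<le> suminf (\<lambda>i. (1/2::real) ^ i)"
    by (rule sum_le_suminf[OF _ I]) auto
  also have "\<dots> = 2" by (simp add: suminf_geometric)
  finally show ?thesis .
qed

lemma geo_int: "finite F \<Longrightarrow> (\<Sum>n\<in>F. (1/2::real) ^ nat \<bar>n - k\<bar>) \<le> 4"
proof -
  assume F: "finite F"
  define F1 where "F1 = {n\<in>F. k \<le> n}"
  define F2 where "F2 = {n\<in>F. n < k}"
  have FF: "F = F1 \<union> F2" "F1 \<inter> F2 = {}" unfolding F1_def F2_def by auto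
  have fin: "finite F1" "finite F2" using F unfolding F1_def F2_def by auto
  have "(\<Sum>n\<in>F1. (1/2::real) ^ nat \<bar>n - k\<bar>) = (\<Sum>n\<in>F1. (1/2::real) ^ (nat (n - k)))"
    by (intro sum.cong) (auto simp: F1_def)
  also have "\<dots> = (\<Sum>i\<in>(\<lambda>n. nat (n - k)) ` F1. (1/2::real) ^ i)"
    by (subst sum.reindex) (auto simp: inj_on_def F1_def)
  also have "\<dots> \<le> 2" using fin by (intro geo_nat) auto
  finally have s1: "(\<Sum>n\<in>F1. (1/2::real) ^ nat \<bar>n - k\<bar>) \<le> 2" .
  have "(\<Sum>n\<in>F2. (1/2::real) ^ nat \<bar>n - k\<bar>) = (\<Sum>n\<in>F2. (1/2::real) ^ (nat (k - n)))"
    by (intro sum.cong) (auto simp: F2_def)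
  also have "\<dots> = (\<Sum>i\<in>(\<lambda>n. nat (k - n)) ` F2. (1/2::real) ^ i)"
    by (subst sum.reindex) (auto simp: inj_on_def F2_def)
  also have "\<dots> \<le> 2" using fin by (intro geo_nat) auto
  finally have s2: "(\<Sum>n\<in>F2. (1/2::real) ^ nat \<bar>n - k\<bar>) \<le> 2" .
  have "(\<Sum>n\<in>F. (1/2::real) ^ nat \<bar>n - k\<bar>) = (\<Sum>n\<in>F1. (1/2::real) ^ nat \<bar>n - k\<bar>) + (\<Sum>n\<in>F2. (1/2::real) ^ nat \<bar>n - k\<bar>)"
    using FF fin by (simp add: sum.union_disjoint)
  then show ?thesis using s1 s2 by linarith
qed

lemma infsum_finsum:
  fixes \<phi> :: "'i \<Rightarrow> 'a \<Rightarrow> real"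
  assumes "finite F" "\<And>n. n \<in> F \<Longrightarrow> \<phi> n summable_on A"
  shows "(\<lambda>k. \<Sum>n\<in>F. \<phi> n k) summable_on A \<and> infsum (\<lambda>k. \<Sum>n\<in>F. \<phi> n k) A = (\<Sum>n\<in>F. infsum (\<phi> n) A)"
  using assms
proof (induction F rule: finite_induct)
  case empty then show ?case by simp
next
  case (insert x F)
  have s1: "\<phi> x summable_on A" using insert.prems by blast
  have s2: "(\<lambda>k. \<Sum>n\<in>F. \<phi> n k) summable_on A" and e2: "infsum (\<lambda>k. \<Sum>n\<in>F. \<phi> n k) A = (\<Sum>n\<in>F. infsum (\<phi> n) A)"
    using insert.IH insert.prems by blast+
  have "(\<lambda>k. \<phi> x k + (\<Sum>n\<in>F. \<phi> n k)) summable_on A" using summable_on_add[OF s1 s2] .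
  moreover have "infsum (\<lambda>k. \<phi> x k + (\<Sum>n\<in>F. \<phi> n k)) A = infsum (\<phi> x) A + infsum (\<lambda>k. \<Sum>n\<in>F. \<phi> n k) A"
    using infsum_add[OF s1 s2] .
  ultimately show ?case using insert.hyps e2 by simp
qed

context scset begin

lemma fin_bound:
  assumes wpos: "\<And>k. 0 < w k" and wK: "\<And>n k. w n \<le> K ^ nat \<bar>n - k\<bar> * w k"
    and K0: "0 \<le> K" and Kq: "K * q \<le> 1/2" and P: "1 \<le> P"
    and hs: "(\<lambda>k. w k * f k powr P) summable_on UNIV"
  shows "(\<lambda>n. w n * sc q f n powr P) summable_on UNIV"
proof -
  define h where "h k = w k * f k powr P" for k
  have h0: "0 \<le> h k" for k unfolding h_def using wpos[of k] by simp
  have hs': "h summable_on UNIV" using hs unfolding h_def .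
  define \<phi> where "\<phi> n k = (1/2::real) ^ nat \<bar>n - k\<bar> * h k" for n k
  have \<phi>0: "0 \<le> \<phi> n k" for n k unfolding \<phi>_def using h0[of k] by simp
  have \<phi>s: "\<phi> n summable_on UNIV" for n
  proof (rule summable_on_comparison_test[OF hs'])
    fix k
    have "(1/2::real) ^ nat \<bar>n - k\<bar> \<le> 1" by (simp add: power_le_one)
    then show "\<phi> n k \<le> h k" unfolding \<phi>_def using h0[of k] by (simp add: mult_left_le_one_le)
    show "0 \<le> \<phi> n k" by (rule \<phi>0)
  qed
  define Y where "Y n = infsum (\<phi> n) UNIV" for n
  have Y_ge: "\<phi> n k \<le> Y n" for n k
  proof -
    have "infsum (\<phi> n) {k} \<le> infsum (\<phi> n) UNIV"
      by (rule infsum_mono_neutral) (auto simp: \<phi>s \<phi>0)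
    then show ?thesis unfolding Y_def by simp
  qed
  have Y0: "0 \<le> Y n" for n using Y_ge[of n 0] \<phi>0[of n 0] by linarith
  have pw: "w n * sc q f n powr P \<le> Y n" for n
  proof -
    have P0: "0 < P" using P by simp
    have "sc q f n \<le> (Y n / w n) powr (1/P)"
    proof (rule least)
      fix k
      define d where "d = nat \<bar>n - k\<bar>"
      have qd: "0 \<le> q ^ d" "q ^ d \<le> 1" using q0 q1 by (auto simp: power_le_one)
      have "(q ^ d * f k) powr P = (q ^ d) powr P * f k powr P" by (rule powr_mult)
      also have "\<dots> \<le> (q ^ d) * f k powr P"
      proof (rule mult_right_mono)
        have "(q ^ d) powr P \<le> (q ^ d) powr 1" using qd P by (intro powr_mono') auto
        then show "(q ^ d) powr P \<le> q ^ d" using qd by (simp add: powr_one)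
      qed simp
      finally have e1: "(q ^ d * f k) powr P \<le> q ^ d * f k powr P" .
      have "w n * (q ^ d * f k powr P) \<le> (K ^ d * w k) * (q ^ d * f k powr P)"
        using wK[of n k] q0 unfolding d_def by (intro mult_right_mono) auto
      also have "\<dots> = (K * q) ^ d * h k" unfolding h_def by (simp add: power_mult_distrib algebra_simps)
      also have "\<dots> \<le> (1/2) ^ d * h k"
        using Kq K0 q0 h0[of k] by (intro mult_right_mono power_mono) auto
      also have "\<dots> \<le> Y n" using Y_ge[of n k] unfolding \<phi>_def d_def .
      finally have "w n * (q ^ d * f k powr P) \<le> Y n" .
      then have e2: "q ^ d * f k powr P \<le> Y n / w n" using wpos[of n] by (simp add: field_simps)
      have x0: "0 \<le> q ^ d * f k" using qd f0[of k] by simp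
      have "q ^ d * f k = ((q ^ d * f k) powr P) powr (1/P)"
        using x0 P0 by (simp add: powr_powr)
      also have "\<dots> \<le> (Y n / w n) powr (1/P)"
        using e1 e2 P0 by (intro powr_mono2) auto
      finally show "q ^ nat \<bar>n - k\<bar> * f k \<le> (Y n / w n) powr (1/P)" unfolding d_def .
    qed
    then have "sc q f n powr P \<le> ((Y n / w n) powr (1/P)) powr P"
      using nonneg[of n] P0 by (intro powr_mono2) auto
    also have "\<dots> = Y n / w n" using P0 Y0[of n] wpos[of n] by (simp add: powr_powr)
    finally show ?thesis using wpos[of n] by (simp add: field_simps)
  qed
  have Ys: "Y summable_on UNIV"
  proof (rule nonneg_bdd_above_summable_on)
    show "\<And>x. x \<in> UNIV \<Longrightarrow> 0 \<le> Y x" using Y0 by blast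
    show "bdd_above (sum Y ` {F. F \<subseteq> UNIV \<and> finite F})"
    proof (rule bdd_aboveI2)
      fix F :: "int set" assume "F \<in> {F. F \<subseteq> UNIV \<and> finite F}"
      then have F: "finite F" by simp
      have sw: "(\<lambda>k. \<Sum>n\<in>F. \<phi> n k) summable_on UNIV \<and> infsum (\<lambda>k. \<Sum>n\<in>F. \<phi> n k) UNIV = (\<Sum>n\<in>F. infsum (\<phi> n) UNIV)"
        using infsum_finsum[OF F, of \<phi> UNIV] \<phi>s by blast
      have "sum Y F = infsum (\<lambda>k. \<Sum>n\<in>F. \<phi> n k) UNIV" using sw unfolding Y_def by simp
      also have "\<dots> \<le> infsum (\<lambda>k. h k * 4) UNIV"
      proof (rule infsum_mono)
        show "(\<lambda>k. \<Sum>n\<in>F. \<phi> n k) summable_on UNIV" using sw by blast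
        show "(\<lambda>k. h k * 4) summable_on UNIV" using summable_on_cmult_left[OF hs'] .
        fix k
        have "(\<Sum>n\<in>F. \<phi> n k) = (\<Sum>n\<in>F. (1/2::real) ^ nat \<bar>n - k\<bar>) * h k"
          unfolding \<phi>_def by (simp add: sum_distrib_right)
        also have "\<dots> \<le> 4 * h k" using geo_int[OF F, of k] h0[of k] by (intro mult_right_mono) auto
        finally show "(\<Sum>n\<in>F. \<phi> n k) \<le> h k * 4" by simp
      qed
      also have "\<dots> = infsum h UNIV * 4" by (rule infsum_cmult_left) (use hs' in auto)
      finally show "sum Y F \<le> infsum h UNIV * 4" .
    qed
  qed
  show ?thesis
  proof (rule summable_on_comparison_test[OF Ys])
    show "\<And>n. n \<in> UNIV \<Longrightarrow> w n * sc q f n powr P \<le> Y n" using pw by blast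
    show "\<And>n. n \<in> UNIV \<Longrightarrow> 0 \<le> w n * sc q f n powr P" using wpos by (simp add: less_imp_le)
  qed
qed

end


lemma wdist_aux:
  fixes w :: "int \<Rightarrow> real"
  assumes up: "\<And>n. w (n + 1) \<le> K * w n" and dn: "\<And>n. w n \<le> K * w (n + 1)" and K0: "0 \<le> K"
  shows "w (k + int d) \<le> K ^ d * w k \<and> w (k - int d) \<le> K ^ d * w k"
proof (induction d)
  case 0 then show ?case by simp
next
  case (Suc d)
  have "w (k + int (Suc d)) = w ((k + int d) + 1)" by (simp add: ac_simps)
  also have "\<dots> \<le> K * w (k + int d)" by (rule up)
  also have "\<dots> \<le> K * (K ^ d * w k)" using Suc.IH K0 by (intro mult_left_mono) auto
  finally have 1: "w (k + int (Suc d)) \<le> K ^ Suc d * w k" by simp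
  have "w (k - int (Suc d)) \<le> K * w ((k - int (Suc d)) + 1)" by (rule dn)
  also have "(k - int (Suc d)) + 1 = k - int d" by simp
  also have "K * w (k - int d) \<le> K * (K ^ d * w k)" using Suc.IH K0 by (intro mult_left_mono) auto
  finally have 2: "w (k - int (Suc d)) \<le> K ^ Suc d * w k" by simp
  show ?case using 1 2 by blast
qed

lemma wdist:
  fixes w :: "int \<Rightarrow> real"
  assumes up: "\<And>n. w (n + 1) \<le> K * w n" and dn: "\<And>n. w n \<le> K * w (n + 1)" and K0: "0 \<le> K"
  shows "w n \<le> K ^ nat \<bar>n - k\<bar> * w k"
proof -
  have A: "w (k + int d) \<le> K ^ d * w k \<and> w (k - int d) \<le> K ^ d * w k" for d
    using up dn K0 by (rule wdist_aux)
  show ?thesis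
proof (cases "k \<le> n")
  case True
  then have "n = k + int (nat \<bar>n - k\<bar>)" by simp
  then show ?thesis using A[of "nat \<bar>n - k\<bar>"] by metis
next
  case False
  then have "n = k - int (nat \<bar>n - k\<bar>)" by simp
  then show ?thesis using A[of "nat \<bar>n - k\<bar>"] by metis
qed
qed

lemma powr_sum_le:
  fixes a b P :: real
  assumes a: "0 \<le> a" and b: "0 \<le> b" and P: "0 < P"
  shows "(a + b) powr P \<le> 2 powr P * (a powr P + b powr P)"
proof -
  have "a + b \<le> 2 * max a b" by simp
  then have "(a + b) powr P \<le> (2 * max a b) powr P" using a b P by (intro powr_mono2) auto
  also have "\<dots> = 2 powr P * max a b powr P" by (rule powr_mult)
  also have "max a b powr P \<le> a powr P + b powr P"
    by (cases "a \<le> b") (auto simp: max_def)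
  then have "2 powr P * max a b powr P \<le> 2 powr P * (a powr P + b powr P)" by (intro mult_left_mono) auto
  finally show ?thesis .
qed

lemma refl_deriv:
  fixes X :: "real \<Rightarrow> complex"
  assumes "(X has_vector_derivative D) (at (2 * t0 - s))"
  shows "((\<lambda>s. X (2 * t0 - s)) has_vector_derivative - D) (at s)"
proof -
  have "((\<lambda>s. 2 * t0 - s) has_real_derivative -1) (at s)"
    by (auto intro!: derivative_eq_intros)
  then have d: "((\<lambda>s. 2 * t0 - s) has_vector_derivative -1) (at s)"
    by (simp add: has_real_derivative_iff_has_vector_derivative)
  have "((X \<circ> (\<lambda>s. 2 * t0 - s)) has_vector_derivative (-1) *\<^sub>R D) (at s)"
    by (rule vector_diff_chain_at[OF d]) (use assms in simp)
  then show ?thesis by (simp add: o_def)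
qed


theorem lemma3p2:
  fixes w :: "int \<Rightarrow> real" and p :: ereal
    and rm rp :: nat and cm cp :: "nat \<Rightarrow> complex"
    and t0 T :: real
    and \<alpha> \<beta> \<alpha>l \<beta>l \<alpha>r \<beta>r :: "real \<Rightarrow> int \<Rightarrow> complex"
  assumes w_ge: "\<And>n. w n \<ge> 1"
    and w_ratio: "bdd_above (range (\<lambda>n. \<bar>w (n + 1) / w n\<bar> + \<bar>w n / w (n + 1)\<bar>))"
    and p: "1 \<le> p"
    and T: "T > 0"
    and sol: "AL_solution rm rp cm cp {t0 - T<..<t0 + T} \<alpha> \<beta>"
    and sol_l: "AL_solution rm rp cm cp {t0 - T<..<t0 + T} \<alpha>l \<beta>l"
    and sol_r: "AL_solution rm rp cm cp {t0 - T<..<t0 + T} \<alpha>r \<beta>r"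
    and init: "wnorm_finite w p
                 (\<lambda>n. \<alpha> t0 n - (if n \<ge> 0 then \<alpha>r t0 n else \<alpha>l t0 n))
                 (\<lambda>n. \<beta> t0 n - (if n \<ge> 0 then \<beta>r t0 n else \<beta>l t0 n))"
  shows "\<forall>t\<in>{t0 - T<..<t0 + T}. wnorm_finite w p
                 (\<lambda>n. \<alpha> t n - (if n \<ge> 0 then \<alpha>r t n else \<alpha>l t n))
                 (\<lambda>n. \<beta> t n - (if n \<ge> 0 then \<beta>r t n else \<beta>l t n))"
proof -
  define I where "I = {t0 - T<..<t0 + T}"
  define PA where "PA = Pa rm rp cm cp"
  define PB where "PB = Pb rm rp cm cp"
  obtain M1 a' b' where M1: "\<And>t n. t \<in> I \<Longrightarrow> norm (\<alpha> t n) \<le> M1 \<and> norm (\<beta> t n) \<le> M1"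
    and D1: "\<And>t n. t \<in> I \<Longrightarrow> ((\<lambda>s. \<alpha> s n) has_vector_derivative a' t n) (at t) \<and>
           ((\<lambda>s. \<beta> s n) has_vector_derivative b' t n) (at t) \<and>
           a' t n = PA (\<alpha> t) (\<beta> t) n \<and> b' t n = PB (\<alpha> t) (\<beta> t) n"
    using sol_eqs[OF sol] unfolding I_def PA_def PB_def by metis
  obtain M2 al' bl' where M2: "\<And>t n. t \<in> I \<Longrightarrow> norm (\<alpha>l t n) \<le> M2 \<and> norm (\<beta>l t n) \<le> M2"
    and D2: "\<And>t n. t \<in> I \<Longrightarrow> ((\<lambda>s. \<alpha>l s n) has_vector_derivative al' t n) (at t) \<and>
           ((\<lambda>s. \<beta>l s n) has_vector_derivative bl' t n) (at t) \<and>
           al' t n = PA (\<alpha>l t) (\<beta>l t) n \<and> bl' t n = PB (\<alpha>l t) (\<beta>l t) n"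
    using sol_eqs[OF sol_l] unfolding I_def PA_def PB_def by metis
  obtain M3 ar' br' where M3: "\<And>t n. t \<in> I \<Longrightarrow> norm (\<alpha>r t n) \<le> M3 \<and> norm (\<beta>r t n) \<le> M3"
    and D3: "\<And>t n. t \<in> I \<Longrightarrow> ((\<lambda>s. \<alpha>r s n) has_vector_derivative ar' t n) (at t) \<and>
           ((\<lambda>s. \<beta>r s n) has_vector_derivative br' t n) (at t) \<and>
           ar' t n = PA (\<alpha>r t) (\<beta>r t) n \<and> br' t n = PB (\<alpha>r t) (\<beta>r t) n"
    using sol_eqs[OF sol_r] unfolding I_def PA_def PB_def by metis
  define M where "M = max (max M1 M2) (max M3 0)"
  have Mb: "bnd M (\<alpha> t) (\<beta> t) (\<alpha>r t) (\<beta>r t)" "bnd M (\<alpha> t) (\<beta> t) (\<alpha>l t) (\<beta>l t)" if "t \<in> I" for t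
    using M1[OF that] M2[OF that] M3[OF that] unfolding bnd_def M_def by (meson max.coboundedI1 max.coboundedI2 order_trans)+
  have M0: "0 \<le> M" unfolding M_def by simp
  obtain Ra where Ra: "locR Ra PA" using loc_Pa unfolding PA_def loc_def by blast
  obtain Rb where Rb: "locR Rb PB" using loc_Pb unfolding PB_def loc_def by blast
  define R where "R = max Ra Rb"
  have RA: "locR R PA" using locR_mono[OF Ra] unfolding R_def by simp
  have RB: "locR R PB" using locR_mono[OF Rb] unfolding R_def by simp
  obtain Ca Ba where CA: "\<forall>a b a' b' n. bnd M a b a' b' \<longrightarrow>
      norm (PA a b n) \<le> Ba \<and> norm (PA a b n - PA a' b' n) \<le> Ca * dsum R a b a' b' n"
    using locRD[OF RA, of M] by blast
  obtain Cb Bb where CB: "\<forall>a b a' b' n. bnd M a b a' b' \<longrightarrow>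
      norm (PB a b n) \<le> Bb \<and> norm (PB a b n - PB a' b' n) \<le> Cb * dsum R a b a' b' n"
    using locRD[OF RB, of M] by blast
  define C where "C = max (max Ca Cb) 0"
  define B where "B = max (max Ba Bb) 0"
  have C0: "0 \<le> C" and B0: "0 \<le> B" unfolding C_def B_def by simp_all
  define g where "g n = (if - int R \<le> n \<and> n < int R then 2 * B else 0)" for n
  have g0: "0 \<le> g n" for n unfolding g_def using B0 by simp
  define x where "x t n = \<alpha> t n - (if n \<ge> 0 then \<alpha>r t n else \<alpha>l t n)" for t n
  define y where "y t n = \<beta> t n - (if n \<ge> 0 then \<beta>r t n else \<beta>l t n)" for t n
  define x' where "x' t n = a' t n - (if n \<ge> 0 then ar' t n else al' t n)" for t n
  define y' where "y' t n = b' t n - (if n \<ge> 0 then br' t n else bl' t n)" for t n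
  define u where "u n t = norm (x t n) + norm (y t n)" for n t
  have dx: "((\<lambda>r. x r n) has_vector_derivative x' t n) (at t)" if "t \<in> I" for t n
    unfolding x_def x'_def using D1[OF that, of n] D2[OF that, of n] D3[OF that, of n]
    by (cases "n \<ge> 0") (auto intro!: has_vector_derivative_diff)
  have dy: "((\<lambda>r. y r n) has_vector_derivative y' t n) (at t)" if "t \<in> I" for t n
    unfolding y_def y'_def using D1[OF that, of n] D2[OF that, of n] D3[OF that, of n]
    by (cases "n \<ge> 0") (auto intro!: has_vector_derivative_diff)
  have diff2: "norm (a - b) \<le> 2 * M" if "norm a \<le> M" "norm b \<le> M" for a b :: complex
    using that norm_triangle_ineq4[of a b] by linarith
  have ub: "u n t \<le> 4 * M" if "t \<in> I" for t n
  proof -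
    have "norm (x t n) \<le> 2 * M"
      unfolding x_def using Mb[OF that] unfolding bnd_def
      by (cases "n \<ge> 0") (auto intro!: diff2)
    moreover have "norm (y t n) \<le> 2 * M"
      unfolding y_def using Mb[OF that] unfolding bnd_def
      by (cases "n \<ge> 0") (auto intro!: diff2)
    ultimately show ?thesis unfolding u_def by simp
  qed

  have u0: "0 \<le> u n t" for n t unfolding u_def by simp
  have sum0: "0 \<le> (\<Sum>j\<in>{-int R..int R}. u (n+j) t)" for n t by (intro sum_nonneg) (simp add: u0)
  have bx: "norm (x' t n) \<le> C * (\<Sum>j\<in>{-int R..int R}. u (n+j) t) + g n" if tI: "t \<in> I" for t n
  proof -
    have Cs: "0 \<le> C * (\<Sum>j\<in>{-int R..int R}. u (n+j) t)" using C0 sum0 by simp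
    consider (r) "int R \<le> n" | (l) "n < - int R" | (m) "- int R \<le> n \<and> n < int R" by linarith
    then show ?thesis
    proof cases
      case r
      have n0: "0 \<le> n" using r by simp
      have e: "x' t n = PA (\<alpha> t) (\<beta> t) n - PA (\<alpha>r t) (\<beta>r t) n"
        unfolding x'_def using D1[OF tI, of n] D3[OF tI, of n] n0 by simp
      have ds: "dsum R (\<alpha> t) (\<beta> t) (\<alpha>r t) (\<beta>r t) n = (\<Sum>j\<in>{-int R..int R}. u (n+j) t)"
        unfolding dsum_def u_def x_def y_def using r by (intro sum.cong) auto
      have "norm (x' t n) \<le> Ca * dsum R (\<alpha> t) (\<beta> t) (\<alpha>r t) (\<beta>r t) n" using CA Mb(1)[OF tI] e by simp
      also have "\<dots> \<le> C * dsum R (\<alpha> t) (\<beta> t) (\<alpha>r t) (\<beta>r t) n"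
        by (intro mult_right_mono) (auto simp: C_def dsum_nonneg)
      finally show ?thesis using ds g0[of n] by simp
    next
      case l
      have n0: "\<not> 0 \<le> n" using l by simp
      have e: "x' t n = PA (\<alpha> t) (\<beta> t) n - PA (\<alpha>l t) (\<beta>l t) n"
        unfolding x'_def using D1[OF tI, of n] D2[OF tI, of n] n0 by simp
      have ds: "dsum R (\<alpha> t) (\<beta> t) (\<alpha>l t) (\<beta>l t) n = (\<Sum>j\<in>{-int R..int R}. u (n+j) t)"
        unfolding dsum_def u_def x_def y_def using l by (intro sum.cong) auto
      have "norm (x' t n) \<le> Ca * dsum R (\<alpha> t) (\<beta> t) (\<alpha>l t) (\<beta>l t) n" using CA Mb(2)[OF tI] e by simp
      also have "\<dots> \<le> C * dsum R (\<alpha> t) (\<beta> t) (\<alpha>l t) (\<beta>l t) n"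
        by (intro mult_right_mono) (auto simp: C_def dsum_nonneg)
      finally show ?thesis using ds g0[of n] by simp
    next
      case m
      have gn: "g n = 2 * B" unfolding g_def using m by simp
      have b1: "norm (PA (\<alpha> t) (\<beta> t) n) \<le> B" using CA Mb(1)[OF tI] unfolding B_def by (meson max.coboundedI1 order_trans)
      have b2: "norm (PA (\<alpha>r t) (\<beta>r t) n) \<le> B"
        using CA bnd_swap[OF Mb(1)[OF tI]] unfolding B_def by (meson max.coboundedI1 order_trans)
      have b3: "norm (PA (\<alpha>l t) (\<beta>l t) n) \<le> B"
        using CA bnd_swap[OF Mb(2)[OF tI]] unfolding B_def by (meson max.coboundedI1 order_trans)
      have "norm (x' t n) \<le> 2 * B"
      proof (cases "0 \<le> n")
        case True
        then have "x' t n = PA (\<alpha> t) (\<beta> t) n - PA (\<alpha>r t) (\<beta>r t) n"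
          unfolding x'_def using D1[OF tI, of n] D3[OF tI, of n] by simp
        then show ?thesis using b1 b2 norm_triangle_ineq4[of "PA (\<alpha> t) (\<beta> t) n" "PA (\<alpha>r t) (\<beta>r t) n"] by (smt (verit))
      next
        case False
        then have "x' t n = PA (\<alpha> t) (\<beta> t) n - PA (\<alpha>l t) (\<beta>l t) n"
          unfolding x'_def using D1[OF tI, of n] D2[OF tI, of n] by simp
        then show ?thesis using b1 b3 norm_triangle_ineq4[of "PA (\<alpha> t) (\<beta> t) n" "PA (\<alpha>l t) (\<beta>l t) n"] by (smt (verit))
      qed
      then show ?thesis using Cs gn by linarith
    qed
  qed
  have by': "norm (y' t n) \<le> C * (\<Sum>j\<in>{-int R..int R}. u (n+j) t) + g n" if tI: "t \<in> I" for t n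
  proof -
    have Cs: "0 \<le> C * (\<Sum>j\<in>{-int R..int R}. u (n+j) t)" using C0 sum0 by simp
    consider (r) "int R \<le> n" | (l) "n < - int R" | (m) "- int R \<le> n \<and> n < int R" by linarith
    then show ?thesis
    proof cases
      case r
      have n0: "0 \<le> n" using r by simp
      have e: "y' t n = PB (\<alpha> t) (\<beta> t) n - PB (\<alpha>r t) (\<beta>r t) n"
        unfolding y'_def using D1[OF tI, of n] D3[OF tI, of n] n0 by simp
      have ds: "dsum R (\<alpha> t) (\<beta> t) (\<alpha>r t) (\<beta>r t) n = (\<Sum>j\<in>{-int R..int R}. u (n+j) t)"
        unfolding dsum_def u_def x_def y_def using r by (intro sum.cong) auto
      have "norm (y' t n) \<le> Cb * dsum R (\<alpha> t) (\<beta> t) (\<alpha>r t) (\<beta>r t) n" using CB Mb(1)[OF tI] e by simp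
      also have "\<dots> \<le> C * dsum R (\<alpha> t) (\<beta> t) (\<alpha>r t) (\<beta>r t) n"
        by (intro mult_right_mono) (auto simp: C_def dsum_nonneg)
      finally show ?thesis using ds g0[of n] by simp
    next
      case l
      have n0: "\<not> 0 \<le> n" using l by simp
      have e: "y' t n = PB (\<alpha> t) (\<beta> t) n - PB (\<alpha>l t) (\<beta>l t) n"
        unfolding y'_def using D1[OF tI, of n] D2[OF tI, of n] n0 by simp
      have ds: "dsum R (\<alpha> t) (\<beta> t) (\<alpha>l t) (\<beta>l t) n = (\<Sum>j\<in>{-int R..int R}. u (n+j) t)"
        unfolding dsum_def u_def x_def y_def using l by (intro sum.cong) auto
      have "norm (y' t n) \<le> Cb * dsum R (\<alpha> t) (\<beta> t) (\<alpha>l t) (\<beta>l t) n" using CB Mb(2)[OF tI] e by simp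
      also have "\<dots> \<le> C * dsum R (\<alpha> t) (\<beta> t) (\<alpha>l t) (\<beta>l t) n"
        by (intro mult_right_mono) (auto simp: C_def dsum_nonneg)
      finally show ?thesis using ds g0[of n] by simp
    next
      case m
      have gn: "g n = 2 * B" unfolding g_def using m by simp
      have b1: "norm (PB (\<alpha> t) (\<beta> t) n) \<le> B" using CB Mb(1)[OF tI] unfolding B_def by (meson max.coboundedI1 max.coboundedI2 order_trans)
      have b2: "norm (PB (\<alpha>r t) (\<beta>r t) n) \<le> B"
        using CB bnd_swap[OF Mb(1)[OF tI]] unfolding B_def by (meson max.coboundedI1 max.coboundedI2 order_trans)
      have b3: "norm (PB (\<alpha>l t) (\<beta>l t) n) \<le> B"
        using CB bnd_swap[OF Mb(2)[OF tI]] unfolding B_def by (meson max.coboundedI1 max.coboundedI2 order_trans)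
      have "norm (y' t n) \<le> 2 * B"
      proof (cases "0 \<le> n")
        case True
        then have "y' t n = PB (\<alpha> t) (\<beta> t) n - PB (\<alpha>r t) (\<beta>r t) n"
          unfolding y'_def using D1[OF tI, of n] D3[OF tI, of n] by simp
        then show ?thesis using b1 b2 norm_triangle_ineq4[of "PB (\<alpha> t) (\<beta> t) n" "PB (\<alpha>r t) (\<beta>r t) n"] by (smt (verit))
      next
        case False
        then have "y' t n = PB (\<alpha> t) (\<beta> t) n - PB (\<alpha>l t) (\<beta>l t) n"
          unfolding y'_def using D1[OF tI, of n] D2[OF tI, of n] by simp
        then show ?thesis using b1 b3 norm_triangle_ineq4[of "PB (\<alpha> t) (\<beta> t) n" "PB (\<alpha>l t) (\<beta>l t) n"] by (smt (verit))
      qed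
      then show ?thesis using Cs gn by linarith
    qed
  qed
  obtain K0 where K0: "\<And>n. \<bar>w (n + 1) / w n\<bar> + \<bar>w n / w (n + 1)\<bar> \<le> K0"
    using w_ratio unfolding bdd_above_def by auto
  define K where "K = max K0 1"
  have K1: "1 \<le> K" unfolding K_def by simp
  have wpos: "0 < w n" for n using w_ge[of n] by simp
  have up: "w (n + 1) \<le> K * w n" for n
  proof -
    have "w (n + 1) / w n \<le> K" using K0[of n] unfolding K_def by (smt (verit))
    then show ?thesis using wpos[of n] by (simp add: pos_divide_le_eq)
  qed
  have dn: "w n \<le> K * w (n + 1)" for n
  proof -
    have "w n / w (n + 1) \<le> K" using K0[of n] unfolding K_def by (smt (verit))
    then show ?thesis using wpos[of "n + 1"] by (simp add: pos_divide_le_eq)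
  qed
  have wK: "w n \<le> K ^ nat \<bar>n - k\<bar> * w k" for n k
    using up dn K1 by (intro wdist) auto
  define q where "q = 1 / (2 * K)"
  have q0: "0 < q" and q1: "q \<le> 1" and Kq: "K * q = 1/2" unfolding q_def using K1 by (auto simp: field_simps)
  have t0I: "t0 \<in> I" unfolding I_def using T by simp
  define f where "f k = u k t0 + g k" for k
  have f0: "0 \<le> f k" for k unfolding f_def using u0 g0 by (simp add: add_nonneg_nonneg)
  have fM: "f k \<le> 4 * M + 2 * B" for k
    unfolding f_def g_def using ub[OF t0I, of k] B0 by auto
  interpret S: scset q f "4 * M + 2 * B"
    by unfold_locales (use q0 q1 f0 fM in auto)
  define W where "W = sc q f"
  define lam where "lam = 2 * (C * (2 * real R + 1) / q ^ R + 1)"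
  have lam0: "0 \<le> lam" unfolding lam_def using C0 q0 by simp
  have W0: "norm (x t0 n) + norm (y t0 n) \<le> W n" for n
    using S.ge[of n] g0[of n] unfolding W_def f_def u_def by simp
  have Wsup: "C * (\<Sum>j\<in>{-int R..int R}. W (n+j)) + g n \<le> lam/2 * W n" for n
  proof -
    have "(\<Sum>j\<in>{-int R..int R}. W (n+j)) \<le> (\<Sum>j\<in>{-int R..int R}. W n / q ^ R)"
    proof (rule sum_mono)
      fix j assume "j \<in> {-int R..int R}"
      then have "\<bar>j\<bar> \<le> int R" by auto
      then have "q ^ R * W (n + j) \<le> W n" unfolding W_def by (rule S.shift)
      then show "W (n + j) \<le> W n / q ^ R" using q0 by (simp add: field_simps)
    qed
    also have "\<dots> = (2 * real R + 1) * (W n / q ^ R)" by simp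
    finally have s: "(\<Sum>j\<in>{-int R..int R}. W (n+j)) \<le> (2 * real R + 1) * (W n / q ^ R)" .
    have gW: "g n \<le> W n" using S.ge[of n] u0[of n t0] unfolding W_def f_def by simp
    have "C * (\<Sum>j\<in>{-int R..int R}. W (n+j)) + g n \<le> C * ((2 * real R + 1) * (W n / q ^ R)) + W n"
      using s gW C0 by (intro add_mono mult_left_mono) auto
    also have "\<dots> = lam / 2 * W n" unfolding lam_def by (simp add: field_simps)
    finally show ?thesis .
  qed
  have JI: "s \<in> I" if "s \<in> {t0..<t0 + T}" for s using that T unfolding I_def by auto
  have JI': "2 * t0 - s \<in> I" if "s \<in> {t0..<t0 + T}" for s using that T unfolding I_def by auto
  have fw: "norm (x s n) + norm (y s n) \<le> exp (lam * (s - t0)) * W n" if "s \<in> {t0..<t0 + T}" for s n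
  proof (rule core_fwd[where x=x and y=y and x'=x' and y'=y' and Mu="4*M" and L=C and R=R and g=g, OF _ _ _ _ _ C0 g0 lam0 W0 Wsup that])
    show "\<And>s n. s \<in> {t0..<t0 + T} \<Longrightarrow> ((\<lambda>r. x r n) has_vector_derivative x' s n) (at s)" using dx JI by blast
    show "\<And>s n. s \<in> {t0..<t0 + T} \<Longrightarrow> ((\<lambda>r. y r n) has_vector_derivative y' s n) (at s)" using dy JI by blast
    show "\<And>s n. s \<in> {t0..<t0 + T} \<Longrightarrow> norm (x s n) + norm (y s n) \<le> 4 * M" using ub JI unfolding u_def by blast
    show "\<And>s n. s \<in> {t0..<t0 + T} \<Longrightarrow> norm (x' s n) \<le> C * (\<Sum>j\<in>{-int R..int R}. norm (x s (n+j)) + norm (y s (n+j))) + g n"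
      using bx JI unfolding u_def by blast
    show "\<And>s n. s \<in> {t0..<t0 + T} \<Longrightarrow> norm (y' s n) \<le> C * (\<Sum>j\<in>{-int R..int R}. norm (x s (n+j)) + norm (y s (n+j))) + g n"
      using by' JI unfolding u_def by blast
  qed
  define x2 where "x2 s n = x (2 * t0 - s) n" for s n
  define y2 where "y2 s n = y (2 * t0 - s) n" for s n
  define x2' where "x2' s n = - x' (2 * t0 - s) n" for s n
  define y2' where "y2' s n = - y' (2 * t0 - s) n" for s n
  have W0': "norm (x2 t0 n) + norm (y2 t0 n) \<le> W n" for n unfolding x2_def y2_def using W0[of n] by simp
  have bw: "norm (x2 s n) + norm (y2 s n) \<le> exp (lam * (s - t0)) * W n" if "s \<in> {t0..<t0 + T}" for s n
  proof (rule core_fwd[where x=x2 and y=y2 and x'=x2' and y'=y2' and Mu="4*M" and L=C and R=R and g=g, OF _ _ _ _ _ C0 g0 lam0 W0' Wsup that])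
    fix s n assume s: "s \<in> {t0..<t0 + T}"
    show "((\<lambda>r. x2 r n) has_vector_derivative x2' s n) (at s)"
      unfolding x2_def x2'_def by (rule refl_deriv[OF dx[OF JI'[OF s]]])
    show "((\<lambda>r. y2 r n) has_vector_derivative y2' s n) (at s)"
      unfolding y2_def y2'_def by (rule refl_deriv[OF dy[OF JI'[OF s]]])
    show "norm (x2 s n) + norm (y2 s n) \<le> 4 * M"
      unfolding x2_def y2_def using ub[OF JI'[OF s], of n] unfolding u_def .
    have "norm (x' (2 * t0 - s) n) \<le> C * (\<Sum>j\<in>{-int R..int R}. u (n+j) (2 * t0 - s)) + g n"
      by (rule bx[OF JI'[OF s]])
    then show "norm (x2' s n) \<le> C * (\<Sum>j\<in>{-int R..int R}. norm (x2 s (n+j)) + norm (y2 s (n+j))) + g n"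
      unfolding x2_def y2_def x2'_def u_def by (simp only: norm_minus_cancel)
    have "norm (y' (2 * t0 - s) n) \<le> C * (\<Sum>j\<in>{-int R..int R}. u (n+j) (2 * t0 - s)) + g n"
      by (rule by'[OF JI'[OF s]])
    then show "norm (y2' s n) \<le> C * (\<Sum>j\<in>{-int R..int R}. norm (x2 s (n+j)) + norm (y2 s (n+j))) + g n"
      unfolding x2_def y2_def y2'_def u_def by (simp only: norm_minus_cancel)
  qed
  have ut: "u n t \<le> exp (lam * \<bar>t - t0\<bar>) * W n" if tI: "t \<in> I" for t n
  proof (cases "t0 \<le> t")
    case True
    then have "t \<in> {t0..<t0 + T}" using tI unfolding I_def by auto
    then show ?thesis using fw[of t n] True unfolding u_def by simp
  next
    case False
    then have "2 * t0 - t \<in> {t0..<t0 + T}" using tI unfolding I_def by auto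
    then show ?thesis using bw[of "2 * t0 - t" n] False unfolding u_def x2_def y2_def by simp
  qed
  have xt: "(\<lambda>n. \<alpha> t n - (if n \<ge> 0 then \<alpha>r t n else \<alpha>l t n)) = x t" for t
    unfolding x_def by (rule refl)
  have yt: "(\<lambda>n. \<beta> t n - (if n \<ge> 0 then \<beta>r t n else \<beta>l t n)) = y t" for t
    unfolding y_def by (rule refl)
  have W00: "0 \<le> W n" for n unfolding W_def by (rule S.nonneg)
  show ?thesis unfolding xt yt I_def[symmetric]
  proof (intro ballI)
    fix t assume tI: "t \<in> I"
    define E where "E = exp (lam * \<bar>t - t0\<bar>)"
    have E0: "0 < E" unfolding E_def by simp
    have uE: "u n t \<le> E * W n" for n unfolding E_def by (rule ut[OF tI])
    show "wnorm_finite w p (x t) (y t)"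
    proof (cases "p = \<infinity>")
      case True
      have i0: "bdd_above (range (\<lambda>n. w n * (norm (x t0 n) + norm (y t0 n))))"
        using init unfolding xt yt wnorm_finite_def using True by simp
      then obtain Bi where Bi: "\<And>n. w n * (norm (x t0 n) + norm (y t0 n)) \<le> Bi"
        unfolding bdd_above_def by auto
      define Bg where "Bg = (\<Sum>k\<in>{-int R..<int R}. w k * (2 * B))"
      have Bg: "w k * g k \<le> Bg" for k
      proof (cases "- int R \<le> k \<and> k < int R")
        case True
        then have "w k * g k = w k * (2 * B)" unfolding g_def by simp
        also have "\<dots> \<le> Bg" unfolding Bg_def using True wpos B0
          by (intro member_le_sum) (auto intro!: mult_nonneg_nonneg simp: less_imp_le)
        finally show ?thesis .
      next
        case False
        then have "w k * g k = 0" using False unfolding g_def by auto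
        also have "0 \<le> Bg" unfolding Bg_def using wpos B0
          by (intro sum_nonneg) (auto intro!: mult_nonneg_nonneg simp: less_imp_le)
        finally show ?thesis .
      qed
      have wf: "w k * f k \<le> Bi + Bg" for k
        using Bi[of k] Bg[of k] unfolding f_def u_def by (simp add: distrib_left)
      have wW: "w n * W n \<le> Bi + Bg" for n
        unfolding W_def using wpos wK K1 Kq wf by (intro S.inf_bound) auto
      have "bdd_above (range (\<lambda>n. w n * (norm (x t n) + norm (y t n))))"
      proof (rule bdd_aboveI2)
        fix n
        have "w n * (norm (x t n) + norm (y t n)) \<le> w n * (E * W n)"
          using uE[of n] wpos[of n] unfolding u_def by (intro mult_left_mono) auto
        also have "\<dots> = E * (w n * W n)" by simp
        also have "\<dots> \<le> E * (Bi + Bg)" using wW[of n] E0 by (intro mult_left_mono) auto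
        finally show "w n * (norm (x t n) + norm (y t n)) \<le> E * (Bi + Bg)" .
      qed
      then show ?thesis unfolding wnorm_finite_def using True by simp
    next
      case False
      define P where "P = real_of_ereal p"
      have pP: "p = ereal P" unfolding P_def using False p by (cases p) auto
      have P1: "1 \<le> P" using p unfolding pP by simp
      have P0: "0 < P" using P1 by simp
      have i0: "(\<lambda>n. w n * (norm (x t0 n) powr P + norm (y t0 n) powr P)) summable_on UNIV"
        using init unfolding xt yt wnorm_finite_def P_def using False by simp
      define G where "G k = w k * g k powr P" for k
      have Gs: "G summable_on UNIV"
      proof -
        have "G summable_on {-int R..<int R}" by simp
        moreover have "G summable_on {-int R..<int R} \<longleftrightarrow> G summable_on UNIV"
          by (rule summable_on_cong_neutral) (auto simp: G_def g_def)
        ultimately show ?thesis by simp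
      qed
      have hb: "w k * f k powr P \<le> 2 powr P * (2 powr P * (w k * (norm (x t0 k) powr P + norm (y t0 k) powr P)) + G k)" for k
      proof -
        have "f k powr P \<le> 2 powr P * (u k t0 powr P + g k powr P)"
          unfolding f_def using u0 g0 P0 by (intro powr_sum_le) auto
        also have "u k t0 powr P \<le> 2 powr P * (norm (x t0 k) powr P + norm (y t0 k) powr P)"
          unfolding u_def using P0 by (intro powr_sum_le) auto
        hence "2 powr P * (u k t0 powr P + g k powr P) \<le> 2 powr P * (2 powr P * (norm (x t0 k) powr P + norm (y t0 k) powr P) + g k powr P)"
          by (intro mult_left_mono add_right_mono) auto
        finally have "f k powr P \<le> 2 powr P * (2 powr P * (norm (x t0 k) powr P + norm (y t0 k) powr P) + g k powr P)" .
        then have "w k * f k powr P \<le> w k * (2 powr P * (2 powr P * (norm (x t0 k) powr P + norm (y t0 k) powr P) + g k powr P))"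
          using wpos[of k] by (intro mult_left_mono) auto
        then show ?thesis unfolding G_def by (simp add: algebra_simps)
      qed
      have hs: "(\<lambda>k. w k * f k powr P) summable_on UNIV"
      proof (rule summable_on_comparison_test)
        show "(\<lambda>k. 2 powr P * (2 powr P * (w k * (norm (x t0 k) powr P + norm (y t0 k) powr P)) + G k)) summable_on UNIV"
        proof -
          have a: "(\<lambda>k. (w k * (norm (x t0 k) powr P + norm (y t0 k) powr P)) * 2 powr P) summable_on UNIV"
            by (rule summable_on_cmult_left[OF i0])
          have b: "(\<lambda>k. (w k * (norm (x t0 k) powr P + norm (y t0 k) powr P)) * 2 powr P + G k) summable_on UNIV"
            by (rule summable_on_add[OF a Gs])
          have "(\<lambda>k. ((w k * (norm (x t0 k) powr P + norm (y t0 k) powr P)) * 2 powr P + G k) * 2 powr P) summable_on UNIV"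
            by (rule summable_on_cmult_left[OF b])
          then show ?thesis by (simp add: algebra_simps)
        qed
        show "\<And>k. k \<in> UNIV \<Longrightarrow> w k * f k powr P \<le> 2 powr P * (2 powr P * (w k * (norm (x t0 k) powr P + norm (y t0 k) powr P)) + G k)"
          using hb by blast
        show "\<And>k. k \<in> UNIV \<Longrightarrow> 0 \<le> w k * f k powr P" using wpos by (simp add: less_imp_le)
      qed
      have Ws: "(\<lambda>n. w n * W n powr P) summable_on UNIV"
        unfolding W_def using wpos wK K1 Kq P1 hs by (intro S.fin_bound) auto
      have "(\<lambda>n. w n * (norm (x t n) powr P + norm (y t n) powr P)) summable_on UNIV"
      proof (rule summable_on_comparison_test)
        show "(\<lambda>n. w n * W n powr P * (2 * E powr P)) summable_on UNIV"
          by (rule summable_on_cmult_left[OF Ws])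
        fix n
        have ueP: "u n t powr P \<le> E powr P * W n powr P"
        proof -
          have "u n t powr P \<le> (E * W n) powr P" using uE[of n] u0 P0 by (intro powr_mono2) auto
          also have "\<dots> = E powr P * W n powr P" by (rule powr_mult)
          finally show ?thesis .
        qed
        have "norm (x t n) powr P \<le> u n t powr P" unfolding u_def using P0 by (intro powr_mono2) auto
        moreover have "norm (y t n) powr P \<le> u n t powr P" unfolding u_def using P0 by (intro powr_mono2) auto
        ultimately have "norm (x t n) powr P + norm (y t n) powr P \<le> 2 * (E powr P * W n powr P)" using ueP by linarith
        then have "w n * (norm (x t n) powr P + norm (y t n) powr P) \<le> w n * (2 * (E powr P * W n powr P))"
          using wpos[of n] by (intro mult_left_mono) auto
        then show "w n * (norm (x t n) powr P + norm (y t n) powr P) \<le> w n * W n powr P * (2 * E powr P)"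
          by (simp add: algebra_simps)
        show "0 \<le> w n * (norm (x t n) powr P + norm (y t n) powr P)" using wpos[of n] by simp
      qed
      then show ?thesis unfolding wnorm_finite_def P_def using False by simp
    qed
  qed
qed


end
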